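(* Let $a,b\in(\frac1{10},10)$, $A=\begin{pmatrix}a&0\\0&b\end{pmatrix}$, and for integers $1\le k\le k'\le2k$ let $u_1=\cos(kx)e^{-k\sqrt a\,t}$, $u_2=\cos(k'y)e^{-k'\sqrt b\,t}$ (solutions of $\ddot u+\operatorname{div}(A\nabla u)=0$). There exist universal constants $D>0$ and $M$ such that for every $0<\varepsilon<D$ and all such $k,k'$ with $\varepsilon^{-1/4}\le k,k'\le\varepsilon^{-1/3}$: (i) there exist a $C^2$ function $u$ and a $C^1$ real $2\times 2$ matrix function $\tilde A$ in the regularity class $R(20,10)$ with $\ddot u+\operatorname{div}(\tilde A\nabla u)=0$ on $\mathbb{T}^2\times\mathbb{R}$, $u=u_1$ and $\tilde A=A$ for $t\le0$, $u=u_1+\varepsilon u_2$ and $\tilde A=A$ for $t\ge\varepsilon^{1/3}$; and for $t\in[0,\varepsilon^{1/3}]$, $u=f(t)\cos(kx)+g(t)\cos(k'y)$ with $f,g\in C^2$, $|f^{(\alpha)}(t)|\le Mk^\alpha e^{-k\sqrt a\,t}$ and $|g^{(\alpha)}(t)|\le M(k')^\alpha\varepsilon^{(3-\alpha)/3}e^{-k'\sqrt b\,t}$ for $0\le\alpha\le2$; (ii) similarly there exist such $u,\tilde A$ (same regularity class, same time interval $[0,\varepsilon^{1/3}]$) with $u=\varepsilon u_1+u_2$ for $t\le0$ and $u=u_2$ for $t\ge\varepsilon^{1/3}$, $\tilde A=A$ outside $[0,\varepsilon^{1/3}]$, and for $t\in[0,\varepsilon^{1/3}]$, $u=f(t)\cos(kx)+g(t)\cos(k'y)$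 with $f,g\in C^2$, $|f^{(\alpha)}(t)|\le Mk^\alpha\varepsilon^{(3-\alpha)/3}e^{-k\sqrt a\,t}$ and $|g^{(\alpha)}(t)|\le M(k')^\alpha e^{-k'\sqrt b\,t}$ for $0\le\alpha\le2$.
   Context: $\mathbb{T}^2=(\mathbb{R}/2\pi\mathbb{Z})^2$ with coordinates $(x,y)$; $t$ the third coordinate. $\ddot u+\operatorname{div}(A\nabla u)$ means $\partial_t^2u+\sum_{i,j\in\{x,y\}}\partial_i(A_{ij}\partial_ju)$. Regularity class $R(\Lambda,C)$: $\Lambda^{-1}|\xi|^2\le\xi^TA\xi\le\Lambda|\xi|^2$ for all $\xi\in\mathbb{R}^2$ at every point, and the entries of $A$ are $C^1$ with all first partial derivatives in $x,y,t$ bounded by $C$ in absolute value. *)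

theory Defs
  imports "HOL-Analysis.Analysis"
begin

type_synonym pt = "real \<times> real \<times> real"   (* (x, y, t) *)

definition ex :: pt where "ex = (1, 0, 0)"
definition ey :: pt where "ey = (0, 1, 0)"
definition et :: pt where "et = (0, 0, 1)"

definition sdir :: "2 \<Rightarrow> pt" where "sdir i = (if i = 1 then ex else ey)"

definition pd :: "(pt \<Rightarrow> real) \<Rightarrow> pt \<Rightarrow> pt \<Rightarrow> real" where
  "pd f v p = frechet_derivative f (at p) v"

definition C1_fun :: "(pt \<Rightarrow> real) \<Rightarrow> bool" where
  "C1_fun f \<longleftrightarrow> (\<forall>p. f differentiable (at p)) \<and> (\<forall>v. continuous_on UNIV (pd f v))"

definition C2_fun :: "(pt \<Rightarrow> real) \<Rightarrow> bool" where
  "C2_fun f \<longleftrightarrow> C1_fun f \<and> (\<forall>v. C1_fun (pd f v))"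

text \<open>functions on T^2 x R, i.e. 2 pi-periodic in x and y\<close>
definition periodic_xy :: "(pt \<Rightarrow> 'b) \<Rightarrow> bool" where
  "periodic_xy F \<longleftrightarrow> (\<forall>x y t. F (x + 2*pi, y, t) = F (x, y, t) \<and> F (x, y + 2*pi, t) = F (x, y, t))"

definition wave_op :: "(pt \<Rightarrow> real^2^2) \<Rightarrow> (pt \<Rightarrow> real) \<Rightarrow> pt \<Rightarrow> real" where
  "wave_op A u p = pd (pd u et) et p +
     (\<Sum>i\<in>UNIV. \<Sum>j\<in>UNIV. pd (\<lambda>q. A q $ i $ j * pd u (sdir j) q) (sdir i) p)"

definition reg_class :: "real \<Rightarrow> real \<Rightarrow> (pt \<Rightarrow> real^2^2) \<Rightarrow> bool" where
  "reg_class \<Lambda> C A \<longleftrightarrow>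
     (\<forall>p (\<xi>::real^2). inverse \<Lambda> * norm \<xi> ^ 2 \<le> \<xi> \<bullet> (A p *v \<xi>) \<and> \<xi> \<bullet> (A p *v \<xi>) \<le> \<Lambda> * norm \<xi> ^ 2) \<and>
     (\<forall>i j. C1_fun (\<lambda>p. A p $ i $ j) \<and>
        (\<forall>p v. v \<in> {ex, ey, et} \<longrightarrow> \<bar>pd (\<lambda>q. A q $ i $ j) v p\<bar> \<le> C))"

definition diag_mat :: "real \<Rightarrow> real \<Rightarrow> real^2^2" where
  "diag_mat a b = (\<chi> i j. if i = j then (if i = 1 then a else b) else 0)"

text \<open>F 0, F 1, F 2 are f, f', f'' on [0,T], f'' continuous there (f is C^2 on [0,T])\<close>
definition C2_derivs :: "real \<Rightarrow> (nat \<Rightarrow> real \<Rightarrow> real) \<Rightarrow> bool" where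
  "C2_derivs T F \<longleftrightarrow>
     (\<forall>t\<in>{0..T}. (F 0 has_real_derivative F 1 t) (at t within {0..T}) \<and>
                 (F 1 has_real_derivative F 2 t) (at t within {0..T})) \<and>
     continuous_on {0..T} (F 2)"

end

theory Submission
  imports Defs
begin



definition pp :: "nat \<Rightarrow> real \<Rightarrow> real" where "pp n s = (max s 0) ^ n"

lemma pp_cont: "continuous_on UNIV (pp n)"
  unfolding pp_def by (intro continuous_intros)

lemma pp_isCont: "isCont (pp n) x"
  using pp_cont by (simp add: continuous_on_eq_continuous_at)

lemma pp_deriv:
  assumes "n \<ge> 2"
  shows "(pp n has_real_derivative (real n * pp (n - 1) x)) (at x)"
proof -
  consider "x > 0" | "x < 0" | "x = 0" by linarith
  then show ?thesis
  proof cases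
    case 1
    have "((\<lambda>s. s ^ n) has_real_derivative (real n * pp (n - 1) x)) (at x)"
      using DERIV_pow[of n x] 1 by (simp add: pp_def)
    then show ?thesis
      apply (rule has_field_derivative_transform_within_open[where S="{0<..}"])
      using 1 by (auto simp: pp_def)
  next
    case 2
    have "((\<lambda>s. 0) has_real_derivative 0) (at x)" by simp
    then have "((\<lambda>s. 0) has_real_derivative (real n * pp (n - 1) x)) (at x)"
      using 2 assms by (simp add: pp_def power_0_left)
    then show ?thesis
      apply (rule has_field_derivative_transform_within_open[where S="{..<0}"])
      using 2 assms by (auto simp: pp_def)
  next
    case 3
    have "\<exists>g. (\<forall>z. pp n z - pp n x = g z * (z - x)) \<and> isCont g x \<and> g x = real n * pp (n - 1) x"
    proof (intro exI conjI allI)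
      fix z show "pp n z - pp n x = pp (n-1) z * (z - x)"
        using 3 assms by (cases "z \<ge> 0") (auto simp: pp_def power_eq_if)
    next
      show "isCont (pp (n-1)) x" by (rule pp_isCont)
      show "pp (n - 1) x = real n * pp (n - 1) x" using 3 assms by (simp add: pp_def)
    qed
    then show ?thesis by (simp add: CARAT_DERIV)
  qed
qed




definition hasgrad :: "(pt \<Rightarrow> real) \<Rightarrow> (pt \<Rightarrow> real) \<Rightarrow> (pt \<Rightarrow> real) \<Rightarrow> (pt \<Rightarrow> real) \<Rightarrow> bool" where
  "hasgrad f fx fy ft \<longleftrightarrow> (\<forall>p. (f has_derivative (\<lambda>v. fx p * fst v + fy p * fst (snd v) + ft p * snd (snd v))) (at p))"

lemma hg_eq: "hasgrad f fx fy ft \<Longrightarrow> fx = gx \<Longrightarrow> fy = gy \<Longrightarrow> ft = gt \<Longrightarrow> hasgrad f gx gy gt"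
  by simp

lemma hg_const: "hasgrad (\<lambda>p. c) (\<lambda>p. 0) (\<lambda>p. 0) (\<lambda>p. 0)"
  unfolding hasgrad_def by (auto intro: has_derivative_eq_rhs[OF has_derivative_const])

lemma hg_add:
  assumes "hasgrad f fx fy ft" "hasgrad g gx gy gt"
  shows "hasgrad (\<lambda>p. f p + g p) (\<lambda>p. fx p + gx p) (\<lambda>p. fy p + gy p) (\<lambda>p. ft p + gt p)"
  unfolding hasgrad_def
proof
  fix p
  have "((\<lambda>p. f p + g p) has_derivative (\<lambda>v. (fx p * fst v + fy p * fst (snd v) + ft p * snd (snd v))
     + (gx p * fst v + gy p * fst (snd v) + gt p * snd (snd v)))) (at p)"
  proof -
    have f: "(f has_derivative (\<lambda>v. fx p * fst v + fy p * fst (snd v) + ft p * snd (snd v))) (at p)"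
      using assms(1) unfolding hasgrad_def by blast
    have g: "(g has_derivative (\<lambda>v. gx p * fst v + gy p * fst (snd v) + gt p * snd (snd v))) (at p)"
      using assms(2) unfolding hasgrad_def by blast
    show ?thesis by (rule has_derivative_add[OF f g])
  qed
  then show "((\<lambda>p. f p + g p) has_derivative (\<lambda>v. (fx p + gx p) * fst v + (fy p + gy p) * fst (snd v) + (ft p + gt p) * snd (snd v))) (at p)"
    by (rule has_derivative_eq_rhs) (simp add: fun_eq_iff algebra_simps)
qed

lemma hg_mult:
  assumes "hasgrad f fx fy ft" "hasgrad g gx gy gt"
  shows "hasgrad (\<lambda>p. f p * g p) (\<lambda>p. fx p * g p + f p * gx p) (\<lambda>p. fy p * g p + f p * gy p) (\<lambda>p. ft p * g p + f p * gt p)"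
  unfolding hasgrad_def
proof
  fix p
  have "((\<lambda>p. f p * g p) has_derivative (\<lambda>v. f p * (gx p * fst v + gy p * fst (snd v) + gt p * snd (snd v))
     + (fx p * fst v + fy p * fst (snd v) + ft p * snd (snd v)) * g p)) (at p)"
  proof -
    have f: "(f has_derivative (\<lambda>v. fx p * fst v + fy p * fst (snd v) + ft p * snd (snd v))) (at p)"
      using assms(1) unfolding hasgrad_def by blast
    have g: "(g has_derivative (\<lambda>v. gx p * fst v + gy p * fst (snd v) + gt p * snd (snd v))) (at p)"
      using assms(2) unfolding hasgrad_def by blast
    show ?thesis by (rule has_derivative_mult[OF f g])
  qed
  then show "((\<lambda>p. f p * g p) has_derivative (\<lambda>v. (fx p * g p + f p * gx p) * fst v + (fy p * g p + f p * gy p) * fst (snd v) + (ft p * g p + f p * gt p) * snd (snd v))) (at p)"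
    by (rule has_derivative_eq_rhs) (simp add: fun_eq_iff algebra_simps)
qed

lemma hg_x:
  assumes "\<And>s. (X has_real_derivative X' s) (at s)"
  shows "hasgrad (\<lambda>p. X (fst p)) (\<lambda>p. X' (fst p)) (\<lambda>p. 0) (\<lambda>p. 0)"
  unfolding hasgrad_def
proof
  fix p :: pt
  have "((\<lambda>p. X (fst p)) has_derivative (\<lambda>v. X' (fst p) * fst v)) (at p)"
    using has_derivative_compose[OF has_derivative_fst[OF has_derivative_ident[of "at p"]], of X "(*) (X' (fst p))"]
      assms[of "fst p", unfolded has_field_derivative_def]
    by (simp add: mult.commute)
  then show "((\<lambda>p. X (fst p)) has_derivative (\<lambda>v. X' (fst p) * fst v + 0 * fst (snd v) + 0 * snd (snd v))) (at p)"
    by simp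
qed

lemma hg_y:
  assumes "\<And>s. (X has_real_derivative X' s) (at s)"
  shows "hasgrad (\<lambda>p. X (fst (snd p))) (\<lambda>p. 0) (\<lambda>p. X' (fst (snd p))) (\<lambda>p. 0)"
  unfolding hasgrad_def
proof
  fix p :: pt
  have "((\<lambda>p. X (fst (snd p))) has_derivative (\<lambda>v. X' (fst (snd p)) * fst (snd v))) (at p)"
    using has_derivative_compose[OF has_derivative_fst[OF has_derivative_snd[OF has_derivative_ident[of "at p"]]], of X "(*) (X' (fst (snd p)))"]
      assms[of "fst (snd p)", unfolded has_field_derivative_def]
    by (simp add: mult.commute)
  then show "((\<lambda>p. X (fst (snd p))) has_derivative (\<lambda>v. 0 * fst v + X' (fst (snd p)) * fst (snd v) + 0 * snd (snd v))) (at p)"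
    by simp
qed

lemma hg_t:
  assumes "\<And>s. (X has_real_derivative X' s) (at s)"
  shows "hasgrad (\<lambda>p. X (snd (snd p))) (\<lambda>p. 0) (\<lambda>p. 0) (\<lambda>p. X' (snd (snd p)))"
  unfolding hasgrad_def
proof
  fix p :: pt
  have "((\<lambda>p. X (snd (snd p))) has_derivative (\<lambda>v. X' (snd (snd p)) * snd (snd v))) (at p)"
    using has_derivative_compose[OF has_derivative_snd[OF has_derivative_snd[OF has_derivative_ident[of "at p"]]], of X "(*) (X' (snd (snd p)))"]
      assms[of "snd (snd p)", unfolded has_field_derivative_def]
    by (simp add: mult.commute)
  then show "((\<lambda>p. X (snd (snd p))) has_derivative (\<lambda>v. 0 * fst v + 0 * fst (snd v) + X' (snd (snd p)) * snd (snd v))) (at p)"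
    by simp
qed

lemma pd_hg: "hasgrad f fx fy ft \<Longrightarrow> pd f v p = fx p * fst v + fy p * fst (snd v) + ft p * snd (snd v)"
proof -
  assume h: "hasgrad f fx fy ft"
  have "(f has_derivative (\<lambda>v. fx p * fst v + fy p * fst (snd v) + ft p * snd (snd v))) (at p)"
    using h unfolding hasgrad_def by blast
  then have "frechet_derivative f (at p) = (\<lambda>v. fx p * fst v + fy p * fst (snd v) + ft p * snd (snd v))"
    by (rule frechet_derivative_at[symmetric])
  then show ?thesis by (simp add: pd_def)
qed

lemma pd_hg_ex: "hasgrad f fx fy ft \<Longrightarrow> pd f ex = fx"
  by (rule ext) (simp add: pd_hg ex_def)
lemma pd_hg_ey: "hasgrad f fx fy ft \<Longrightarrow> pd f ey = fy"
  by (rule ext) (simp add: pd_hg ey_def)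
lemma pd_hg_et: "hasgrad f fx fy ft \<Longrightarrow> pd f et = ft"
  by (rule ext) (simp add: pd_hg et_def)

lemma hg_C1:
  assumes "hasgrad f fx fy ft" "continuous_on UNIV fx" "continuous_on UNIV fy" "continuous_on UNIV ft"
  shows "C1_fun f"
  unfolding C1_fun_def
proof
  show "\<forall>p. f differentiable at p" using assms(1) unfolding hasgrad_def differentiable_def by blast
  show "\<forall>v. continuous_on UNIV (pd f v)"
  proof
    fix v
    have "pd f v = (\<lambda>p. fx p * fst v + fy p * fst (snd v) + ft p * snd (snd v))"
      using pd_hg[OF assms(1)] by blast
    then show "continuous_on UNIV (pd f v)" using assms(2-4) by (auto intro!: continuous_intros)
  qed
qed

lemma cont_t: "continuous_on UNIV X \<Longrightarrow> continuous_on UNIV (\<lambda>p::pt. X (snd (snd p)))"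
  by (rule continuous_on_compose2[of UNIV X]) (auto intro!: continuous_intros)




definition chi0 :: "real \<Rightarrow> real" where
 "chi0 s = 35*pp 4 s - 84*pp 5 s + 70*pp 6 s - 20*pp 7 s + 35*pp 4 (s-1) + 84*pp 5 (s-1) + 70*pp 6 (s-1) + 20*pp 7 (s-1)"
definition chi1 :: "real \<Rightarrow> real" where
 "chi1 s = 140*pp 3 s - 420*pp 4 s + 420*pp 5 s - 140*pp 6 s + 140*pp 3 (s-1) + 420*pp 4 (s-1) + 420*pp 5 (s-1) + 140*pp 6 (s-1)"
definition chi2 :: "real \<Rightarrow> real" where
 "chi2 s = 420*pp 2 s - 1680*pp 3 s + 2100*pp 4 s - 840*pp 5 s + 420*pp 2 (s-1) + 1680*pp 3 (s-1) + 2100*pp 4 (s-1) + 840*pp 5 (s-1)"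
definition chi3 :: "real \<Rightarrow> real" where
 "chi3 s = 840*pp 1 s - 5040*pp 2 s + 8400*pp 3 s - 4200*pp 4 s + 840*pp 1 (s-1) + 5040*pp 2 (s-1) + 8400*pp 3 (s-1) + 4200*pp 4 (s-1)"

lemma pp_deriv_chain [derivative_intros]:
  assumes "2 \<le> n" "(f has_real_derivative f') (at x)"
  shows "((\<lambda>s. pp n (f s)) has_real_derivative (real n * pp (n - 1) (f x) * f')) (at x)"
  using DERIV_chain2[OF pp_deriv[OF assms(1)] assms(2)] by simp

lemma chi0_deriv: "(chi0 has_real_derivative chi1 s) (at s)"
proof -
  have "((\<lambda>s. 35*pp 4 s - 84*pp 5 s + 70*pp 6 s - 20*pp 7 s + 35*pp 4 (s-1) + 84*pp 5 (s-1) + 70*pp 6 (s-1) + 20*pp 7 (s-1))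
     has_real_derivative chi1 s) (at s)"
    unfolding chi1_def by (rule derivative_eq_intros refl | simp)+
  then show ?thesis unfolding chi0_def[abs_def] .
qed

lemma chi1_deriv: "(chi1 has_real_derivative chi2 s) (at s)"
proof -
  have "((\<lambda>s. 140*pp 3 s - 420*pp 4 s + 420*pp 5 s - 140*pp 6 s + 140*pp 3 (s-1) + 420*pp 4 (s-1) + 420*pp 5 (s-1) + 140*pp 6 (s-1))
     has_real_derivative chi2 s) (at s)"
    unfolding chi2_def by (rule derivative_eq_intros refl | simp)+
  then show ?thesis unfolding chi1_def[abs_def] .
qed

lemma chi2_deriv: "(chi2 has_real_derivative chi3 s) (at s)"
proof -
  have "((\<lambda>s. 420*pp 2 s - 1680*pp 3 s + 2100*pp 4 s - 840*pp 5 s + 420*pp 2 (s-1) + 1680*pp 3 (s-1) + 2100*pp 4 (s-1) + 840*pp 5 (s-1))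
     has_real_derivative chi3 s) (at s)"
    unfolding chi3_def by (rule derivative_eq_intros refl | simp)+
  then show ?thesis unfolding chi2_def[abs_def] .
qed

lemma chi3_cont: "continuous_on UNIV chi3"
  unfolding chi3_def[abs_def] pp_def by (intro continuous_intros)

lemma pp_neg: "s \<le> 0 \<Longrightarrow> n \<ge> 1 \<Longrightarrow> pp n s = 0"
  by (simp add: pp_def max_def)
lemma pp_pos: "s \<ge> 0 \<Longrightarrow> pp n s = s ^ n"
  by (simp add: pp_def max_def)

lemma chi_left: "s \<le> 0 \<Longrightarrow> chi0 s = 0 \<and> chi1 s = 0 \<and> chi2 s = 0 \<and> chi3 s = 0"
  by (simp add: chi0_def chi1_def chi2_def chi3_def pp_neg)

lemma chi_right: "s \<ge> 1 \<Longrightarrow> chi0 s = 1 \<and> chi1 s = 0 \<and> chi2 s = 0 \<and> chi3 s = 0"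
proof -
  assume s: "s \<ge> 1"
  define r where "r = s - 1"
  have r: "r \<ge> 0" "s = r + 1" using s by (auto simp: r_def)
  show ?thesis unfolding chi0_def chi1_def chi2_def chi3_def
    using r by (simp add: pp_pos r_def[symmetric]) (simp add: power_def numeral_eq_Suc algebra_simps)
qed

lemma chi_mid:
  assumes "0 \<le> s" "s \<le> 1"
  shows "\<bar>chi0 s\<bar> \<le> 18480 \<and> \<bar>chi1 s\<bar> \<le> 18480 \<and> \<bar>chi2 s\<bar> \<le> 18480 \<and> \<bar>chi3 s\<bar> \<le> 18480"
proof -
  have z: "pp n (s - 1) = 0" if "n \<ge> 1" for n using assms that pp_neg[of "s-1" n] by simp
  have b: "0 \<le> s ^ n" for n using assms by simp
  have c: "s ^ n \<le> 1" for n using assms by (simp add: power_le_one)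
  show ?thesis unfolding chi0_def chi1_def chi2_def chi3_def
    apply (simp add: z pp_pos[OF assms(1)] abs_le_iff)
    using b[of 1] b[of 2] b[of 3] b[of 4] b[of 5] b[of 6] b[of 7] c[of 1] c[of 2] c[of 3] c[of 4] c[of 5] c[of 6] c[of 7] assms
    by (intro conjI; linarith)
qed




lemma ab_mult: "\<bar>a\<bar> \<le> A \<Longrightarrow> \<bar>b\<bar> \<le> (B::real) \<Longrightarrow> \<bar>a * b\<bar> \<le> A * B"
  by (simp add: abs_mult mult_mono')

lemma exp4: "exp (4::real) \<le> 81"
proof -
  have "exp (4::real) = exp 1 ^ 4" using exp_of_nat_mult[of 4 "1::real"] by simp
  also have "\<dots> \<le> 3 ^ 4" by (rule power_mono[OF exp_le]) simp
  finally show ?thesis by simp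
qed

locale transloc =
  fixes h0 h1 h2 h3 :: "real \<Rightarrow> real" and T \<mu> \<nu> \<kappa> :: real
  assumes d0: "\<And>s. (h0 has_real_derivative h1 s) (at s)"
    and d1: "\<And>s. (h1 has_real_derivative h2 s) (at s)"
    and d2: "\<And>s. (h2 has_real_derivative h3 s) (at s)"
    and c3: "continuous_on UNIV h3"
    and bnd: "\<And>s. 0 \<le> s \<Longrightarrow> s \<le> 1 \<Longrightarrow> \<bar>h0 s\<bar> \<le> 20000 \<and> \<bar>h1 s\<bar> \<le> 20000 \<and> \<bar>h2 s\<bar> \<le> 20000 \<and> \<bar>h3 s\<bar> \<le> 20000"
    and van: "\<And>s. s \<le> 0 \<or> 1 \<le> s \<Longrightarrow> h1 s = 0 \<and> h2 s = 0 \<and> h3 s = 0"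
    and Tpos: "0 < T" and mu: "0 \<le> \<mu>" "\<mu> * T \<le> 4" and nu: "0 \<le> \<nu>" "\<nu> * T \<le> 4" and kap: "0 < \<kappa>"
begin

lemma Tne: "T \<noteq> 0" using Tpos by simp
lemma Tne2: "T^2 \<noteq> 0" using Tpos by simp
lemma Tne3: "T^3 \<noteq> 0" using Tpos by simp

lemma hc0 [derivative_intros]: "(f has_real_derivative f') (at t) \<Longrightarrow> ((\<lambda>t. h0 (f t)) has_real_derivative h1 (f t) * f') (at t)"
  by (rule DERIV_chain2[OF d0])
lemma hc1 [derivative_intros]: "(f has_real_derivative f') (at t) \<Longrightarrow> ((\<lambda>t. h1 (f t)) has_real_derivative h2 (f t) * f') (at t)"
  by (rule DERIV_chain2[OF d1])
lemma hc2 [derivative_intros]: "(f has_real_derivative f') (at t) \<Longrightarrow> ((\<lambda>t. h2 (f t)) has_real_derivative h3 (f t) * f') (at t)"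
  by (rule DERIV_chain2[OF d2])

definition "G0 t = T^3 * h0 (t*(1/T)) * exp (-\<mu>*t)"
definition "G1 t = T^3 * exp (-\<mu>*t) * (h1 (t*(1/T))/T - \<mu>*h0 (t*(1/T)))"
definition "G2 t = T^3 * exp (-\<mu>*t) * (h2 (t*(1/T))/T^2 - 2*\<mu>*h1 (t*(1/T))/T + \<mu>^2*h0 (t*(1/T)))"
definition "ps t = T^3/\<kappa> * exp ((\<nu>-\<mu>)*t) * (h2 (t*(1/T))/T^2 - 2*\<mu>*h1 (t*(1/T))/T)"
definition "ps1 t = T^3/\<kappa> * exp ((\<nu>-\<mu>)*t) * ((\<nu>-\<mu>)*(h2 (t*(1/T))/T^2 - 2*\<mu>*h1 (t*(1/T))/T) + h3 (t*(1/T))/T^3 - 2*\<mu>*h2 (t*(1/T))/T^2)"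

lemma G0_deriv: "(G0 has_real_derivative G1 t) (at t)"
  unfolding G0_def[abs_def] G1_def
  apply (rule derivative_eq_intros refl Tne Tne2 Tne3)+
  using Tpos by (simp add: field_simps power2_eq_square power3_eq_cube)

lemma G1_deriv: "(G1 has_real_derivative G2 t) (at t)"
  unfolding G1_def[abs_def] G2_def
  apply (rule derivative_eq_intros refl Tne Tne2 Tne3)+
  using Tpos by (simp add: field_simps power2_eq_square power3_eq_cube)

lemma ps_deriv: "(ps has_real_derivative ps1 t) (at t)"
  unfolding ps_def[abs_def] ps1_def
  apply (rule derivative_eq_intros refl Tne Tne2 Tne3)+
  using Tpos kap by (simp add: field_simps power2_eq_square power3_eq_cube)

lemma cont_h: "continuous_on UNIV h0" "continuous_on UNIV h1" "continuous_on UNIV h2"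
  using d0 d1 d2 by (auto intro!: DERIV_isCont simp: continuous_on_eq_continuous_at)

lemma cont_sc: "continuous_on UNIV h \<Longrightarrow> continuous_on UNIV (\<lambda>t. h (t*(1/T)))"
  by (rule continuous_on_compose2[of UNIV h]) (use Tne in \<open>auto intro!: continuous_intros\<close>)

lemma cont_G2: "continuous_on UNIV G2"
proof -
  note a = cont_sc[OF cont_h(1)] cont_sc[OF cont_h(2)] cont_sc[OF cont_h(3)]
  show ?thesis unfolding G2_def[abs_def]
    by (intro continuous_intros a ballI Tne Tne2 Tne3)
qed

lemma cont_ps1: "continuous_on UNIV ps1"
proof -
  note a = cont_sc[OF c3] cont_sc[OF cont_h(2)] cont_sc[OF cont_h(3)]
  show ?thesis unfolding ps1_def[abs_def]
    by (intro continuous_intros a ballI Tne Tne2 Tne3)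
qed

lemma ode: "G2 t = \<mu>^2 * G0 t + \<kappa> * exp (-\<nu>*t) * ps t"
proof -
  have e: "exp (-\<nu>*t) * exp ((\<nu>-\<mu>)*t) = exp (-\<mu>*t)" by (simp add: exp_add[symmetric] algebra_simps)
  have g: "\<kappa> * a * (c/\<kappa> * b * Y) = c*(a*b)*Y" for a b c Y using kap by (simp add: field_simps)
  have "\<kappa> * exp (-\<nu>*t) * ps t = T^3 * exp (-\<mu>*t) * (h2 (t/T)/T^2 - 2*\<mu>*h1 (t/T)/T)"
    unfolding ps_def g e by simp
  then show ?thesis unfolding G2_def G0_def
    by (simp add: algebra_simps)
qed

lemma ps_out: "t \<le> 0 \<or> T \<le> t \<Longrightarrow> ps t = 0 \<and> ps1 t = 0"
proof -
  assume "t \<le> 0 \<or> T \<le> t"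
  then have "t/T \<le> 0 \<or> 1 \<le> t/T" using Tpos by (auto simp: field_simps)
  then show ?thesis using van[of "t/T"] unfolding ps_def ps1_def by simp
qed

lemma in01: "0 \<le> t \<Longrightarrow> t \<le> T \<Longrightarrow> 0 \<le> t/T \<and> t/T \<le> 1"
  using Tpos by (auto simp: field_simps)

lemma mT: "\<bar>\<mu>*T\<bar> \<le> 4" "\<bar>\<nu>*T\<bar> \<le> 4" "\<bar>(\<nu>-\<mu>)*T\<bar> \<le> 4"
proof -
  have "0 \<le> \<mu>*T" "0 \<le> \<nu>*T" using mu nu Tpos by auto
  then show "\<bar>\<mu>*T\<bar> \<le> 4" "\<bar>\<nu>*T\<bar> \<le> 4" "\<bar>(\<nu>-\<mu>)*T\<bar> \<le> 4"
    using mu nu by (auto simp: left_diff_distrib abs_le_iff)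
qed

lemma rep:
  "G0 t = T^3 * exp (-\<mu>*t) * h0 (t/T)"
  "G1 t = T^2 * exp (-\<mu>*t) * (h1 (t/T) - (\<mu>*T) * h0 (t/T))"
  "G2 t = T * exp (-\<mu>*t) * (h2 (t/T) - 2*(\<mu>*T)*h1 (t/T) + (\<mu>*T)^2 * h0 (t/T))"
  "ps t = T/\<kappa> * exp ((\<nu>-\<mu>)*t) * (h2 (t/T) - 2*(\<mu>*T)*h1 (t/T))"
  "ps1 t = 1/\<kappa> * exp ((\<nu>-\<mu>)*t) * (((\<nu>-\<mu>)*T)*(h2 (t/T) - 2*(\<mu>*T)*h1 (t/T)) + h3 (t/T) - 2*(\<mu>*T)*h2 (t/T))"
  unfolding G0_def G1_def G2_def ps_def ps1_def
  using Tpos kap by (simp_all add: field_simps power2_eq_square power3_eq_cube)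

lemma absbound: "0 \<le> P \<Longrightarrow> \<bar>Y\<bar> \<le> B \<Longrightarrow> \<bar>P * Y\<bar> \<le> P * (B::real)"
  by (simp add: abs_mult mult_left_mono)

lemma bounds_G:
  assumes t: "0 \<le> t" "t \<le> T"
  shows "\<bar>G0 t\<bar> \<le> T^3 * exp (-\<mu>*t) * 20000 \<and> \<bar>G1 t\<bar> \<le> T^2 * exp (-\<mu>*t) * 100000 \<and>
         \<bar>G2 t\<bar> \<le> T * exp (-\<mu>*t) * 500000"
proof -
  have s: "0 \<le> t/T" "t/T \<le> 1" using in01[OF t] by auto
  note b = bnd[OF s]
  have m: "\<bar>\<mu>*T\<bar> \<le> 4" by (rule mT)
  have m2: "\<bar>(\<mu>*T)^2\<bar> \<le> 16" using power_mono[OF m, of 2] by (simp add: power_abs)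
  have y1: "\<bar>h1 (t/T) - (\<mu>*T) * h0 (t/T)\<bar> \<le> 100000"
    using ab_mult[OF m, of "h0 (t/T)" 20000] b by (simp add: abs_le_iff) 
  have y2: "\<bar>h2 (t/T) - 2*(\<mu>*T)*h1 (t/T) + (\<mu>*T)^2 * h0 (t/T)\<bar> \<le> 500000"
    using ab_mult[OF m, of "h1 (t/T)" 20000] ab_mult[OF m2, of "h0 (t/T)" 20000] b by (simp add: abs_le_iff)
  show ?thesis unfolding rep
    using absbound[of "T^3 * exp (-\<mu>*t)" "h0 (t/T)" 20000] absbound[OF _ y1, of "T^2 * exp (-\<mu>*t)"]
      absbound[OF _ y2, of "T * exp (-\<mu>*t)"] b Tpos by simp
qed

lemma e81: "0 \<le> t \<Longrightarrow> t \<le> T \<Longrightarrow> exp ((\<nu>-\<mu>)*t) \<le> 81"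
proof -
  assume t: "0 \<le> t" "t \<le> T"
  have "(\<nu>-\<mu>)*t \<le> \<nu>*t" using mu t by (simp add: algebra_simps)
  also have "\<nu>*t \<le> \<nu>*T" using nu t by (simp add: mult_left_mono)
  also have "\<dots> \<le> 4" using nu by simp
  finally show ?thesis using exp4 by (meson exp_le_cancel_iff order_trans)
qed

lemma bounds_ps: "\<bar>ps t\<bar> \<le> T/\<kappa> * 14580000 \<and> \<bar>ps1 t\<bar> \<le> 1/\<kappa> * 72900000"
proof (cases "0 \<le> t \<and> t \<le> T")
  case False
  then have "ps t = 0 \<and> ps1 t = 0" using ps_out by force
  then show ?thesis using Tpos kap by simp
next
  case True
  then have t: "0 \<le> t" "t \<le> T" by auto
  have s: "0 \<le> t/T" "t/T \<le> 1" using in01[OF t] by auto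
  note b = bnd[OF s]
  have m: "\<bar>\<mu>*T\<bar> \<le> 4" "\<bar>(\<nu>-\<mu>)*T\<bar> \<le> 4" by (rule mT)+
  have y1: "\<bar>h2 (t/T) - 2*(\<mu>*T)*h1 (t/T)\<bar> \<le> 180000"
    using ab_mult[OF m(1), of "h1 (t/T)" 20000] b by (simp add: abs_le_iff)
  have y2: "\<bar>((\<nu>-\<mu>)*T)*(h2 (t/T) - 2*(\<mu>*T)*h1 (t/T)) + h3 (t/T) - 2*(\<mu>*T)*h2 (t/T)\<bar> \<le> 900000"
    using ab_mult[OF m(2) y1] ab_mult[OF m(1), of "h2 (t/T)" 20000] b by (simp add: abs_le_iff)
  have E: "0 \<le> exp ((\<nu>-\<mu>)*t)" "exp ((\<nu>-\<mu>)*t) \<le> 81" using e81[OF t] by auto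
  have "\<bar>ps t\<bar> \<le> T/\<kappa> * (81 * 180000)"
    unfolding rep mult.assoc
    apply (rule absbound) using Tpos kap apply simp
    using ab_mult[of "exp ((\<nu>-\<mu>)*t)" 81, OF _ y1] E by (simp add: mult.assoc)
  moreover have "\<bar>ps1 t\<bar> \<le> 1/\<kappa> * (81 * 900000)"
    unfolding rep mult.assoc
    apply (rule absbound) using Tpos kap apply simp
    using ab_mult[of "exp ((\<nu>-\<mu>)*t)" 81, OF _ y2] E by (simp add: mult.assoc)
  ultimately show ?thesis by simp
qed

end




lemma hg_cont: "hasgrad f fx fy ft \<Longrightarrow> continuous_on UNIV f"
  unfolding hasgrad_def
  by (meson continuous_at_imp_continuous_on has_derivative_continuous)

lemma hg_C2:
  assumes h: "hasgrad f fx fy ft" and hx: "hasgrad fx fxx fxy fxt" and hy: "hasgrad fy fyx fyy fyt"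
    and ht: "hasgrad ft ftx fty ftt"
    and c: "continuous_on UNIV fxx" "continuous_on UNIV fxy" "continuous_on UNIV fxt"
      "continuous_on UNIV fyx" "continuous_on UNIV fyy" "continuous_on UNIV fyt"
      "continuous_on UNIV ftx" "continuous_on UNIV fty" "continuous_on UNIV ftt"
  shows "C2_fun f"
  unfolding C2_fun_def
proof
  show "C1_fun f" by (rule hg_C1[OF h hg_cont[OF hx] hg_cont[OF hy] hg_cont[OF ht]])
  show "\<forall>v. C1_fun (pd f v)"
  proof
    fix v :: pt
    have e: "pd f v = (\<lambda>p. fx p * fst v + fy p * fst (snd v) + ft p * snd (snd v))"
      using pd_hg[OF h] by blast
    have g: "hasgrad (\<lambda>p. fx p * fst v + fy p * fst (snd v) + ft p * snd (snd v))
       (\<lambda>p. (fxx p * fst v + fx p * 0) + (fyx p * fst (snd v) + fy p * 0) + (ftx p * snd (snd v) + ft p * 0))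
       (\<lambda>p. (fxy p * fst v + fx p * 0) + (fyy p * fst (snd v) + fy p * 0) + (fty p * snd (snd v) + ft p * 0))
       (\<lambda>p. (fxt p * fst v + fx p * 0) + (fyt p * fst (snd v) + fy p * 0) + (ftt p * snd (snd v) + ft p * 0))"
      by (intro hg_add hg_mult hx hy ht hg_const)
    have cf: "continuous_on UNIV fx" "continuous_on UNIV fy" "continuous_on UNIV ft"
      using hg_cont hx hy ht by blast+
    show "C1_fun (pd f v)" unfolding e
      apply (rule hg_C1[OF g]) using c cf by (auto intro!: continuous_intros)
  qed
qed

definition "cx k p = cos (k * fst (p::pt))"
definition "sx k p = sin (k * fst (p::pt))"
definition "cy k p = cos (k * fst (snd (p::pt)))"
definition "sy k p = sin (k * fst (snd (p::pt)))"
definition "tt (p::pt) = snd (snd p)"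

lemma hg_cx: "hasgrad (cx k) (\<lambda>p. - k * sx k p) (\<lambda>p. 0) (\<lambda>p. 0)"
proof -
  have "hasgrad (\<lambda>p. (\<lambda>s. cos (k * s)) (fst p)) (\<lambda>p. (\<lambda>s. - k * sin (k * s)) (fst p)) (\<lambda>p. 0) (\<lambda>p. 0)"
    by (rule hg_x) (auto intro!: derivative_eq_intros)
  then show ?thesis unfolding cx_def[abs_def] sx_def[abs_def] by simp
qed
lemma hg_sx: "hasgrad (sx k) (\<lambda>p. k * cx k p) (\<lambda>p. 0) (\<lambda>p. 0)"
proof -
  have "hasgrad (\<lambda>p. (\<lambda>s. sin (k * s)) (fst p)) (\<lambda>p. (\<lambda>s. k * cos (k * s)) (fst p)) (\<lambda>p. 0) (\<lambda>p. 0)"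
    by (rule hg_x) (auto intro!: derivative_eq_intros)
  then show ?thesis unfolding cx_def[abs_def] sx_def[abs_def] by simp
qed
lemma hg_cy: "hasgrad (cy k) (\<lambda>p. 0) (\<lambda>p. - k * sy k p) (\<lambda>p. 0)"
proof -
  have "hasgrad (\<lambda>p. (\<lambda>s. cos (k * s)) (fst (snd p))) (\<lambda>p. 0) (\<lambda>p. (\<lambda>s. - k * sin (k * s)) (fst (snd p))) (\<lambda>p. 0)"
    by (rule hg_y) (auto intro!: derivative_eq_intros)
  then show ?thesis unfolding cy_def[abs_def] sy_def[abs_def] by simp
qed
lemma hg_sy: "hasgrad (sy k) (\<lambda>p. 0) (\<lambda>p. k * cy k p) (\<lambda>p. 0)"
proof -
  have "hasgrad (\<lambda>p. (\<lambda>s. sin (k * s)) (fst (snd p))) (\<lambda>p. 0) (\<lambda>p. (\<lambda>s. k * cos (k * s)) (fst (snd p))) (\<lambda>p. 0)"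
    by (rule hg_y) (auto intro!: derivative_eq_intros)
  then show ?thesis unfolding cy_def[abs_def] sy_def[abs_def] by simp
qed
lemma hg_tt: "(\<And>s. (X has_real_derivative X' s) (at s)) \<Longrightarrow> hasgrad (\<lambda>p. X (tt p)) (\<lambda>p. 0) (\<lambda>p. 0) (\<lambda>p. X' (tt p))"
  unfolding tt_def by (rule hg_t)

lemma cont_cx: "continuous_on UNIV (cx k)" "continuous_on UNIV (sx k)" "continuous_on UNIV (cy k)" "continuous_on UNIV (sy k)"
  using hg_cont[OF hg_cx] hg_cont[OF hg_sx] hg_cont[OF hg_cy] hg_cont[OF hg_sy] by auto

lemma cont_tt: "continuous_on UNIV X \<Longrightarrow> continuous_on UNIV (\<lambda>p. X (tt p))"
  unfolding tt_def by (rule cont_t)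




lemma hg_divc: "hasgrad f fx fy ft \<Longrightarrow> hasgrad (\<lambda>p. f p / c) (\<lambda>p. fx p / c) (\<lambda>p. fy p / c) (\<lambda>p. ft p / c)"
  using hg_mult[OF _ hg_const, of f fx fy ft "1/c"] by simp

definition "uu k k' F G = (\<lambda>p. F (tt p) * cx k p + G (tt p) * cy k' p)"
definition "A11 k k' a p1 = (\<lambda>p. a + p1 (tt p) / k * cx k p * cy k' p)"
definition "A21 k k' p1 = (\<lambda>p. 2 * p1 (tt p) / k' * sx k p * sy k' p)"
definition "A12 k k' p2 = (\<lambda>p. 2 * p2 (tt p) / k * sx k p * sy k' p)"
definition "A22 k k' b p2 = (\<lambda>p. b + p2 (tt p) / k' * cx k p * cy k' p)"
definition AA :: "real \<Rightarrow> real \<Rightarrow> real \<Rightarrow> real \<Rightarrow> (real \<Rightarrow> real) \<Rightarrow> (real \<Rightarrow> real) \<Rightarrow> pt \<Rightarrow> real^2^2" where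
 "AA k k' a b p1 p2 = (\<lambda>p. \<chi> i j. if i = 1 then (if j = 1 then A11 k k' a p1 p else A12 k k' p2 p)
    else (if j = 1 then A21 k k' p1 p else A22 k k' b p2 p))"

context
  fixes k k' a b :: real and p1 p1' p2 p2' :: "real \<Rightarrow> real"
  assumes k: "k \<noteq> 0" "k' \<noteq> 0"
    and dp1: "\<And>s. (p1 has_real_derivative p1' s) (at s)"
    and dp2: "\<And>s. (p2 has_real_derivative p2' s) (at s)"
begin

lemma hgA11: "hasgrad (A11 k k' a p1) (\<lambda>p. - p1 (tt p) * sx k p * cy k' p)
   (\<lambda>p. - (k'/k) * p1 (tt p) * cx k p * sy k' p) (\<lambda>p. p1' (tt p) / k * cx k p * cy k' p)"
  unfolding A11_def
  apply (rule hg_eq)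
  apply (rule hg_add hg_mult hg_divc hg_const hg_cx hg_sx hg_cy hg_sy hg_tt dp1)+
  using k by (auto simp: fun_eq_iff field_simps)

lemma hgA21: "hasgrad (A21 k k' p1) (\<lambda>p. 2 * (k/k') * p1 (tt p) * cx k p * sy k' p)
   (\<lambda>p. 2 * p1 (tt p) * sx k p * cy k' p) (\<lambda>p. 2 * p1' (tt p) / k' * sx k p * sy k' p)"
  unfolding A21_def
  apply (rule hg_eq)
  apply (rule hg_add hg_mult hg_divc hg_const hg_cx hg_sx hg_cy hg_sy hg_tt dp1)+
  using k by (auto simp: fun_eq_iff field_simps)

lemma hgA12: "hasgrad (A12 k k' p2) (\<lambda>p. 2 * p2 (tt p) * cx k p * sy k' p)
   (\<lambda>p. 2 * (k'/k) * p2 (tt p) * sx k p * cy k' p) (\<lambda>p. 2 * p2' (tt p) / k * sx k p * sy k' p)"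
  unfolding A12_def
  apply (rule hg_eq)
  apply (rule hg_add hg_mult hg_divc hg_const hg_cx hg_sx hg_cy hg_sy hg_tt dp2)+
  using k by (auto simp: fun_eq_iff field_simps)

lemma hgA22: "hasgrad (A22 k k' b p2) (\<lambda>p. - (k/k') * p2 (tt p) * sx k p * cy k' p)
   (\<lambda>p. - p2 (tt p) * cx k p * sy k' p) (\<lambda>p. p2' (tt p) / k' * cx k p * cy k' p)"
  unfolding A22_def
  apply (rule hg_eq)
  apply (rule hg_add hg_mult hg_divc hg_const hg_cx hg_sx hg_cy hg_sy hg_tt dp2)+
  using k by (auto simp: fun_eq_iff field_simps)

end


definition "uX k F p = - k * F (tt p) * sx k p"
definition "uY k' G p = - k' * G (tt p) * sy k' p"
definition "uT k k' F1 G1 p = F1 (tt p) * cx k p + G1 (tt p) * cy k' p"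

context
  fixes k k' :: real and F F1 F2 G G1 G2 :: "real \<Rightarrow> real"
  assumes dF: "\<And>s. (F has_real_derivative F1 s) (at s)"
    and dF1: "\<And>s. (F1 has_real_derivative F2 s) (at s)"
    and dG: "\<And>s. (G has_real_derivative G1 s) (at s)"
    and dG1: "\<And>s. (G1 has_real_derivative G2 s) (at s)"
begin

lemma hgU: "hasgrad (uu k k' F G) (uX k F) (uY k' G) (uT k k' F1 G1)"
  unfolding uu_def uX_def[abs_def] uY_def[abs_def] uT_def[abs_def]
  apply (rule hg_eq)
  apply (rule hg_add hg_mult hg_divc hg_const hg_cx hg_sx hg_cy hg_sy hg_tt dF dG)+
  by (auto simp: fun_eq_iff field_simps)

lemma hgUX: "hasgrad (uX k F) (\<lambda>p. - (k^2) * F (tt p) * cx k p) (\<lambda>p. 0) (\<lambda>p. - k * F1 (tt p) * sx k p)"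
  unfolding uX_def[abs_def]
  apply (rule hg_eq)
  apply (rule hg_add hg_mult hg_divc hg_const hg_cx hg_sx hg_cy hg_sy hg_tt dF dG)+
  by (auto simp: fun_eq_iff field_simps power2_eq_square)

lemma hgUY: "hasgrad (uY k' G) (\<lambda>p. 0) (\<lambda>p. - (k'^2) * G (tt p) * cy k' p) (\<lambda>p. - k' * G1 (tt p) * sy k' p)"
  unfolding uY_def[abs_def]
  apply (rule hg_eq)
  apply (rule hg_add hg_mult hg_divc hg_const hg_cx hg_sx hg_cy hg_sy hg_tt dF dG)+
  by (auto simp: fun_eq_iff field_simps power2_eq_square)

lemma hgUT: "hasgrad (uT k k' F1 G1) (\<lambda>p. - k * F1 (tt p) * sx k p) (\<lambda>p. - k' * G1 (tt p) * sy k' p)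
   (\<lambda>p. F2 (tt p) * cx k p + G2 (tt p) * cy k' p)"
  unfolding uT_def[abs_def]
  apply (rule hg_eq)
  apply (rule hg_add hg_mult hg_divc hg_const hg_cx hg_sx hg_cy hg_sy hg_tt dF1 dG1)+
  by (auto simp: fun_eq_iff field_simps)

lemma contFG: "continuous_on UNIV F" "continuous_on UNIV F1" "continuous_on UNIV G" "continuous_on UNIV G1"
  using dF dF1 dG dG1 by (auto intro!: DERIV_isCont simp: continuous_on_eq_continuous_at)

lemma C2u:
  assumes "continuous_on UNIV F2" "continuous_on UNIV G2"
  shows "C2_fun (uu k k' F G)"
  apply (rule hg_C2[OF hgU hgUX hgUY hgUT])
  using assms contFG cont_cx
  by (auto intro!: continuous_intros cont_tt)

end

lemma AA_ent:
  "AA k k' a b p1 p2 q $ 1 $ 1 = A11 k k' a p1 q"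
  "AA k k' a b p1 p2 q $ 1 $ 2 = A12 k k' p2 q"
  "AA k k' a b p1 p2 q $ 2 $ 1 = A21 k k' p1 q"
  "AA k k' a b p1 p2 q $ 2 $ 2 = A22 k k' b p2 q"
  by (auto simp: AA_def)

lemma sdir12: "sdir 1 = ex" "sdir 2 = ey"
  by (auto simp: sdir_def)

lemma wave0:
  fixes k k' a b :: real and p1 p1' p2 p2' F F1 F2 G G1 G2 :: "real \<Rightarrow> real"
  assumes k: "k \<noteq> 0" "k' \<noteq> 0"
    and dp1: "\<And>s. (p1 has_real_derivative p1' s) (at s)"
    and dp2: "\<And>s. (p2 has_real_derivative p2' s) (at s)"
    and dF: "\<And>s. (F has_real_derivative F1 s) (at s)"
    and dF1: "\<And>s. (F1 has_real_derivative F2 s) (at s)"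
    and dG: "\<And>s. (G has_real_derivative G1 s) (at s)"
    and dG1: "\<And>s. (G1 has_real_derivative G2 s) (at s)"
    and ode1: "\<And>t. F2 t = a * k^2 * F t + k' * G t * p2 t"
    and ode2: "\<And>t. G2 t = b * k'^2 * G t + k * F t * p1 t"
  shows "wave_op (AA k k' a b p1 p2) (uu k k' F G) p = 0"
proof -
  note U = hgU[OF dF dF1 dG dG1] and UX = hgUX[OF dF dF1 dG dG1] and UY = hgUY[OF dF dF1 dG dG1]
    and UT = hgUT[OF dF dF1 dG dG1]
  note H11 = hgA11[OF k dp1 dp2] and H12 = hgA12[OF k dp1 dp2] and H21 = hgA21[OF k dp1 dp2] and H22 = hgA22[OF k dp1 dp2]
  have e11: "(\<lambda>q. AA k k' a b p1 p2 q $ 1 $ 1 * pd (uu k k' F G) (sdir 1) q) = (\<lambda>q. A11 k k' a p1 q * uX k F q)"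
    by (simp add: AA_ent sdir12 pd_hg_ex[OF U] fun_eq_iff)
  have e12: "(\<lambda>q. AA k k' a b p1 p2 q $ 1 $ 2 * pd (uu k k' F G) (sdir 2) q) = (\<lambda>q. A12 k k' p2 q * uY k' G q)"
    by (simp add: AA_ent sdir12 pd_hg_ey[OF U] fun_eq_iff)
  have e21: "(\<lambda>q. AA k k' a b p1 p2 q $ 2 $ 1 * pd (uu k k' F G) (sdir 1) q) = (\<lambda>q. A21 k k' p1 q * uX k F q)"
    by (simp add: AA_ent sdir12 pd_hg_ex[OF U] fun_eq_iff)
  have e22: "(\<lambda>q. AA k k' a b p1 p2 q $ 2 $ 2 * pd (uu k k' F G) (sdir 2) q) = (\<lambda>q. A22 k k' b p2 q * uY k' G q)"
    by (simp add: AA_ent sdir12 pd_hg_ey[OF U] fun_eq_iff)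
  have w: "wave_op (AA k k' a b p1 p2) (uu k k' F G) p =
     (F2 (tt p) * cx k p + G2 (tt p) * cy k' p)
     + ((- p1 (tt p) * sx k p * cy k' p) * uX k F p + A11 k k' a p1 p * (- (k^2) * F (tt p) * cx k p))
     + ((2 * p2 (tt p) * cx k p * sy k' p) * uY k' G p + A12 k k' p2 p * 0)
     + ((2 * p1 (tt p) * sx k p * cy k' p) * uX k F p + A21 k k' p1 p * 0)
     + ((- p2 (tt p) * cx k p * sy k' p) * uY k' G p + A22 k k' b p2 p * (- (k'^2) * G (tt p) * cy k' p))"
    unfolding wave_op_def sum_2 e11 e12 e21 e22
    unfolding pd_hg_et[OF U] pd_hg_et[OF UT] sdir12
    unfolding pd_hg_ex[OF hg_mult[OF H11 UX]] pd_hg_ex[OF hg_mult[OF H12 UY]]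
      pd_hg_ey[OF hg_mult[OF H21 UX]] pd_hg_ey[OF hg_mult[OF H22 UY]]
    by simp
  have trig: "sx k p ^ 2 = 1 - cx k p ^ 2" "sy k' p ^ 2 = 1 - cy k' p ^ 2"
    unfolding sx_def cx_def sy_def cy_def by (simp_all add: sin_squared_eq)
  show ?thesis unfolding w ode1 ode2 uX_def uY_def A11_def A12_def A21_def A22_def
    using k apply (simp add: field_simps power2_eq_square)
    using trig[unfolded power2_eq_square] by algebra
qed




lemma quad_form:
  fixes \<xi> :: "real^2" and M :: "real^2^2"
  shows "\<xi> \<bullet> (M *v \<xi>) = M$1$1 * (\<xi>$1)^2 + (M$1$2 + M$2$1) * (\<xi>$1 * \<xi>$2) + M$2$2 * (\<xi>$2)^2"
    "norm \<xi> ^ 2 = (\<xi>$1)^2 + (\<xi>$2)^2"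
  unfolding power2_norm_eq_inner
  by (simp_all add: matrix_vector_mult_def inner_vec_def sum_2 algebra_simps power2_eq_square)

lemma quad_bound:
  fixes x y a b e1 e2 c :: real
  assumes "1/10 < a" "a < 10" "1/10 < b" "b < 10" "\<bar>e1\<bar> \<le> 1/100" "\<bar>e2\<bar> \<le> 1/100" "\<bar>c\<bar> \<le> 1/20"
  shows "inverse 20 * (x^2 + y^2) \<le> (a + e1) * x^2 + c * (x*y) + (b + e2) * y^2"
    "(a + e1) * x^2 + c * (x*y) + (b + e2) * y^2 \<le> 20 * (x^2 + y^2)"
proof -
  have xy: "2 * \<bar>x*y\<bar> \<le> x^2 + y^2"
  proof -
    have "0 \<le> (\<bar>x\<bar> - \<bar>y\<bar>)^2" by simp
    then show ?thesis by (simp add: power2_eq_square algebra_simps abs_mult abs_mult_self_eq)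
  qed
  have c: "\<bar>c * (x*y)\<bar> \<le> 1/20 * \<bar>x*y\<bar>" unfolding abs_mult[of c] by (rule mult_right_mono[OF assms(7)]) simp
  have x2: "0 \<le> x^2" "0 \<le> y^2" by simp_all
  have "\<bar>e1\<bar> * x^2 \<le> 1/100 * x^2" by (rule mult_right_mono[OF assms(5)]) simp
  then have e1: "\<bar>e1 * x^2\<bar> \<le> 1/100 * x^2" by (simp add: abs_mult)
  have "\<bar>e2\<bar> * y^2 \<le> 1/100 * y^2" by (rule mult_right_mono[OF assms(6)]) simp
  then have e2: "\<bar>e2 * y^2\<bar> \<le> 1/100 * y^2" by (simp add: abs_mult)
  have a1: "1/10 * x^2 \<le> a * x^2" "a * x^2 \<le> 10 * x^2"
    by (rule mult_right_mono; use assms in auto)+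
  have b1: "1/10 * y^2 \<le> b * y^2" "b * y^2 \<le> 10 * y^2"
    by (rule mult_right_mono; use assms in auto)+
  show "inverse 20 * (x^2 + y^2) \<le> (a + e1) * x^2 + c * (x*y) + (b + e2) * y^2"
    using xy c e1 e2 a1 b1 x2 by (auto simp: algebra_simps abs_le_iff)
  show "(a + e1) * x^2 + c * (x*y) + (b + e2) * y^2 \<le> 20 * (x^2 + y^2)"
    using xy c e1 e2 a1 b1 x2 by (auto simp: algebra_simps abs_le_iff)
qed

lemma trig1: "\<bar>cx k p\<bar> \<le> 1" "\<bar>sx k p\<bar> \<le> 1" "\<bar>cy k p\<bar> \<le> 1" "\<bar>sy k p\<bar> \<le> 1"
  by (simp_all add: cx_def sx_def cy_def sy_def)

lemma b1: "\<bar>x\<bar> \<le> X \<Longrightarrow> \<bar>s\<bar> \<le> 1 \<Longrightarrow> \<bar>x * s\<bar> \<le> (X::real)"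
  by (simp add: abs_mult) (meson abs_ge_zero mult_left_le order_trans)

lemma divle: "1 \<le> (c::real) \<Longrightarrow> \<bar>x\<bar> / c \<le> \<bar>x\<bar>"
proof -
  assume c: "1 \<le> c"
  have "\<bar>x\<bar> * 1 \<le> \<bar>x\<bar> * c" using c by (intro mult_left_mono) auto
  then show ?thesis using c by (simp add: divide_le_eq)
qed

lemma entry_ok:
  assumes "hasgrad f fx fy ft" "continuous_on UNIV fx" "continuous_on UNIV fy" "continuous_on UNIV ft"
    "\<And>p. \<bar>fx p\<bar> \<le> C" "\<And>p. \<bar>fy p\<bar> \<le> C" "\<And>p. \<bar>ft p\<bar> \<le> C"
  shows "C1_fun f \<and> (\<forall>p v. v \<in> {ex, ey, et} \<longrightarrow> \<bar>pd f v p\<bar> \<le> C)"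
  using hg_C1[OF assms(1-4)] assms(5-7) pd_hg_ex[OF assms(1)] pd_hg_ey[OF assms(1)] pd_hg_et[OF assms(1)]
  by auto

lemma reg0:
  fixes k k' a b :: real and p1 p1' p2 p2' :: "real \<Rightarrow> real"
  assumes k: "1 \<le> k" "k \<le> k'" "k' \<le> 2*k"
    and ab: "1/10 < a" "a < 10" "1/10 < b" "b < 10"
    and dp1: "\<And>s. (p1 has_real_derivative p1' s) (at s)"
    and dp2: "\<And>s. (p2 has_real_derivative p2' s) (at s)"
    and cp: "continuous_on UNIV p1'" "continuous_on UNIV p2'"
    and bp: "\<And>t. \<bar>p1 t\<bar> \<le> 1/100" "\<And>t. \<bar>p2 t\<bar> \<le> 1/100" "\<And>t. \<bar>p1' t\<bar> \<le> k" "\<And>t. \<bar>p2' t\<bar> \<le> k"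
  shows "reg_class 20 10 (AA k k' a b p1 p2)"
proof -
  have kn: "k \<noteq> 0" "k' \<noteq> 0" using k by auto
  note H11 = hgA11[OF kn dp1 dp2] and H12 = hgA12[OF kn dp1 dp2] and H21 = hgA21[OF kn dp1 dp2] and H22 = hgA22[OF kn dp1 dp2]
  have cp0: "continuous_on UNIV p1" "continuous_on UNIV p2"
    using dp1 dp2 by (auto intro!: DERIV_isCont simp: continuous_on_eq_continuous_at)
  have kk: "\<bar>k'/k\<bar> \<le> 2" "\<bar>k/k'\<bar> \<le> 1" "0 < k" "0 < k'" using k by (auto simp: field_simps)
  have q1: "\<bar>p1' t / k\<bar> \<le> 1" "\<bar>p2' t / k\<bar> \<le> 1" "\<bar>p1' t / k'\<bar> \<le> 1" "\<bar>p2' t / k'\<bar> \<le> 1" for t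
    using bp(3)[of t] bp(4)[of t] k by (auto simp: field_simps abs_divide)
  have q2: "\<bar>p1 t / k\<bar> \<le> 1/100" "\<bar>p2 t / k\<bar> \<le> 1/100" "\<bar>p1 t / k'\<bar> \<le> 1/100" "\<bar>p2 t / k'\<bar> \<le> 1/100" for t
  proof -
    have "\<bar>p1 t\<bar> / k \<le> \<bar>p1 t\<bar>" "\<bar>p2 t\<bar> / k \<le> \<bar>p2 t\<bar>" "\<bar>p1 t\<bar> / k' \<le> \<bar>p1 t\<bar>" "\<bar>p2 t\<bar> / k' \<le> \<bar>p2 t\<bar>"
      using k by (auto intro: divle)
    moreover have "\<bar>p1 t / k\<bar> = \<bar>p1 t\<bar> / k" "\<bar>p2 t / k\<bar> = \<bar>p2 t\<bar> / k" "\<bar>p1 t / k'\<bar> = \<bar>p1 t\<bar> / k'" "\<bar>p2 t / k'\<bar> = \<bar>p2 t\<bar> / k'"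
      using kk by (simp_all add: abs_divide)
    ultimately show "\<bar>p1 t / k\<bar> \<le> 1/100" "\<bar>p2 t / k\<bar> \<le> 1/100" "\<bar>p1 t / k'\<bar> \<le> 1/100" "\<bar>p2 t / k'\<bar> \<le> 1/100"
      using bp(1)[of t] bp(2)[of t] by linarith+
  qed
  have AAf: "(\<lambda>q. AA k k' a b p1 p2 q $ 1 $ 1) = A11 k k' a p1"
    "(\<lambda>q. AA k k' a b p1 p2 q $ 1 $ 2) = A12 k k' p2"
    "(\<lambda>q. AA k k' a b p1 p2 q $ 2 $ 1) = A21 k k' p1"
    "(\<lambda>q. AA k k' a b p1 p2 q $ 2 $ 2) = A22 k k' b p2"
    by (simp_all add: AA_ent fun_eq_iff)
  note T = trig1
  have ct: "continuous_on UNIV (\<lambda>p. X (tt p))" if "continuous_on UNIV X" for X using cont_tt that by blast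
  note cc = ct[OF cp(1)] ct[OF cp(2)] ct[OF cp0(1)] ct[OF cp0(2)] cont_cx
  have E11: "C1_fun (A11 k k' a p1) \<and> (\<forall>p v. v \<in> {ex, ey, et} \<longrightarrow> \<bar>pd (A11 k k' a p1) v p\<bar> \<le> 10)"
  proof (rule entry_ok[OF H11])
    fix p
    show "\<bar>- p1 (tt p) * sx k p * cy k' p\<bar> \<le> 10"
      using b1[OF b1[OF _ trig1(2)[of k p]] trig1(3)[of k' p], of "- p1 (tt p)" 10] bp(1)[of "tt p"] by simp
    show "\<bar>- (k'/k) * p1 (tt p) * cx k p * sy k' p\<bar> \<le> 10"
      using b1[OF b1[OF ab_mult[of "- (k'/k)" 2 "p1 (tt p)" "1/100"] trig1(1)[of k p]] trig1(4)[of k' p]] bp(1)[of "tt p"] kk by (auto simp: divide_le_eq)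
    show "\<bar>p1' (tt p) / k * cx k p * cy k' p\<bar> \<le> 10"
      using b1[OF b1[OF _ trig1(1)[of k p]] trig1(3)[of k' p], of "p1' (tt p) / k" 10] q1(1)[of "tt p"] by simp
  qed (intro continuous_intros cc ballI kn)+
  have E21: "C1_fun (A21 k k' p1) \<and> (\<forall>p v. v \<in> {ex, ey, et} \<longrightarrow> \<bar>pd (A21 k k' p1) v p\<bar> \<le> 10)"
  proof (rule entry_ok[OF H21])
    fix p
    show "\<bar>2 * (k/k') * p1 (tt p) * cx k p * sy k' p\<bar> \<le> 10"
      using b1[OF b1[OF ab_mult[OF ab_mult[of 2 2 "k/k'" 1], of "p1 (tt p)" "1/100"] trig1(1)[of k p]] trig1(4)[of k' p]] bp(1)[of "tt p"] kk by (auto simp: divide_le_eq)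
    show "\<bar>2 * p1 (tt p) * sx k p * cy k' p\<bar> \<le> 10"
      using b1[OF b1[OF ab_mult[of 2 2 "p1 (tt p)" "1/100"] trig1(2)[of k p]] trig1(3)[of k' p]] bp(1)[of "tt p"] by simp
    show "\<bar>2 * p1' (tt p) / k' * sx k p * sy k' p\<bar> \<le> 10"
      using b1[OF b1[OF ab_mult[of 2 2 "p1' (tt p) / k'" 1] trig1(2)[of k p]] trig1(4)[of k' p]] q1(3)[of "tt p"] by simp
  qed (intro continuous_intros cc ballI kn)+
  have E12: "C1_fun (A12 k k' p2) \<and> (\<forall>p v. v \<in> {ex, ey, et} \<longrightarrow> \<bar>pd (A12 k k' p2) v p\<bar> \<le> 10)"
  proof (rule entry_ok[OF H12])
    fix p
    show "\<bar>2 * p2 (tt p) * cx k p * sy k' p\<bar> \<le> 10"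
      using b1[OF b1[OF ab_mult[of 2 2 "p2 (tt p)" "1/100"] trig1(1)[of k p]] trig1(4)[of k' p]] bp(2)[of "tt p"] by simp
    show "\<bar>2 * (k'/k) * p2 (tt p) * sx k p * cy k' p\<bar> \<le> 10"
      using b1[OF b1[OF ab_mult[OF ab_mult[of 2 2 "k'/k" 2], of "p2 (tt p)" "1/100"] trig1(2)[of k p]] trig1(3)[of k' p]] bp(2)[of "tt p"] kk by (auto simp: divide_le_eq)
    show "\<bar>2 * p2' (tt p) / k * sx k p * sy k' p\<bar> \<le> 10"
      using b1[OF b1[OF ab_mult[of 2 2 "p2' (tt p) / k" 1] trig1(2)[of k p]] trig1(4)[of k' p]] q1(2)[of "tt p"] by simp
  qed (intro continuous_intros cc ballI kn)+
  have E22: "C1_fun (A22 k k' b p2) \<and> (\<forall>p v. v \<in> {ex, ey, et} \<longrightarrow> \<bar>pd (A22 k k' b p2) v p\<bar> \<le> 10)"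
  proof (rule entry_ok[OF H22])
    fix p
    show "\<bar>- (k/k') * p2 (tt p) * sx k p * cy k' p\<bar> \<le> 10"
      using b1[OF b1[OF ab_mult[of "- (k/k')" 1 "p2 (tt p)" "1/100"] trig1(2)[of k p]] trig1(3)[of k' p]] bp(2)[of "tt p"] kk by (auto simp: divide_le_eq)
    show "\<bar>- p2 (tt p) * cx k p * sy k' p\<bar> \<le> 10"
      using b1[OF b1[OF _ trig1(1)[of k p]] trig1(4)[of k' p], of "- p2 (tt p)" 10] bp(2)[of "tt p"] by simp
    show "\<bar>p2' (tt p) / k' * cx k p * cy k' p\<bar> \<le> 10"
      using b1[OF b1[OF _ trig1(1)[of k p]] trig1(3)[of k' p], of "p2' (tt p) / k'" 10] q1(4)[of "tt p"] by simp
  qed (intro continuous_intros cc ballI kn)+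
  have ell: "inverse 20 * norm \<xi> ^ 2 \<le> \<xi> \<bullet> (AA k k' a b p1 p2 p *v \<xi>) \<and> \<xi> \<bullet> (AA k k' a b p1 p2 p *v \<xi>) \<le> 20 * norm \<xi> ^ 2"
    for p \<xi>
  proof -
    have e1: "\<bar>p1 (tt p) / k * cx k p * cy k' p\<bar> \<le> 1/100"
      using b1[OF b1[OF q2(1) trig1(1)[of k p]] trig1(3)[of k' p]] .
    have e2: "\<bar>p2 (tt p) / k' * cx k p * cy k' p\<bar> \<le> 1/100"
      using b1[OF b1[OF q2(4) trig1(1)[of k p]] trig1(3)[of k' p]] .
    have c1: "\<bar>2 * p2 (tt p) / k * sx k p * sy k' p\<bar> \<le> 2 * (1/100)"
      using b1[OF b1[OF ab_mult[of 2 2 "p2 (tt p) / k" "1/100", OF _ q2(2)] trig1(2)[of k p]] trig1(4)[of k' p]] by simp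
    have c2: "\<bar>2 * p1 (tt p) / k' * sx k p * sy k' p\<bar> \<le> 2 * (1/100)"
      using b1[OF b1[OF ab_mult[of 2 2 "p1 (tt p) / k'" "1/100", OF _ q2(3)] trig1(2)[of k p]] trig1(4)[of k' p]] by simp
    have c: "\<bar>2 * p2 (tt p) / k * sx k p * sy k' p + 2 * p1 (tt p) / k' * sx k p * sy k' p\<bar> \<le> 1/20"
      using c1 c2 by linarith
    show ?thesis
      unfolding quad_form AA_ent A11_def A12_def A21_def A22_def
      using quad_bound[OF ab e1 e2 c, of "\<xi>$1" "\<xi>$2"] by simp
  qed
  show ?thesis
    unfolding reg_class_def forall_2 AAf
    using E11 E12 E21 E22 ell by auto
qed




lemma setup_eps:
  fixes \<epsilon> K :: real
  assumes e: "0 < \<epsilon>" "\<epsilon> < (1/1000)^12" and K: "\<epsilon> powr (-1/4) \<le> K" "K \<le> \<epsilon> powr (-1/3)"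
  shows "0 < \<epsilon> powr (1/3)" "\<epsilon> powr (1/3) \<le> (1/1000)^4" "10^9 \<le> K" "K * \<epsilon> powr (1/3) \<le> 1"
    "(\<epsilon> powr (1/3))^3 = \<epsilon>" "(\<epsilon> powr (1/3))^2 = \<epsilon> powr (2/3)"
proof -
  define d :: real where "d = 1/1000"
  have d: "0 < d" by (simp add: d_def)
  have D: "(1/1000::real)^12 = d powr 12" using powr_realpow[OF d, of 12] by (simp add: d_def)
  show "0 < \<epsilon> powr (1/3)" using e by simp
  have "\<epsilon> powr (1/3) < ((1/1000)^12) powr (1/3)" by (rule powr_less_mono2) (use e in auto)
  also have "\<dots> = d powr 4" unfolding D powr_powr by simp
  also have "\<dots> = (1/1000)^4" using powr_realpow[OF d, of 4] by (simp add: d_def)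
  finally show "\<epsilon> powr (1/3) \<le> (1/1000)^4" by simp
  have "((1/1000)^12) powr (-1/4) < \<epsilon> powr (-1/4)" by (rule powr_less_mono2_neg) (use e in auto)
  moreover have "((1/1000::real)^12) powr (-1/4) = 10^9"
  proof -
    have "((1/1000::real)^12) powr (-1/4) = d powr (-3)" unfolding D powr_powr by simp
    also have "\<dots> = inverse (d powr 3)" by (rule powr_minus[of d 3, simplified])
    also have "\<dots> = 10^9" using powr_realpow[OF d, of 3] by (simp add: d_def inverse_eq_divide power_divide)
    finally show ?thesis .
  qed
  ultimately show "10^9 \<le> K" using K by simp
  have "\<epsilon> powr (-1/3) = inverse (\<epsilon> powr (1/3))" using powr_minus[of \<epsilon> "1/3"] by simp
  then have i: "\<epsilon> powr (-1/3) * \<epsilon> powr (1/3) = 1" using e by simp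
  have "K * \<epsilon> powr (1/3) \<le> \<epsilon> powr (-1/3) * \<epsilon> powr (1/3)"
    by (rule mult_right_mono[OF K(2)]) (use e in simp)
  then show "K * \<epsilon> powr (1/3) \<le> 1" using i by simp
  show "(\<epsilon> powr (1/3))^3 = \<epsilon>" using powr_power[of \<epsilon> "1/3" 3] e by simp
  show "(\<epsilon> powr (1/3))^2 = \<epsilon> powr (2/3)" using powr_power[of \<epsilon> "1/3" 2] e by simp
qed

lemma cos_per: "cos (real n * (x + 2*pi)) = cos (real n * x)" "sin (real n * (x + 2*pi)) = sin (real n * x)"
proof -
  have c: "cos (real n * (2*pi)) = 1" "sin (real n * (2*pi)) = 0"
    using cos_int_2pin[of "int n"] sin_int_2pin[of "int n"] by (simp_all add: mult.commute)
  show "cos (real n * (x + 2*pi)) = cos (real n * x)" "sin (real n * (x + 2*pi)) = sin (real n * x)"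
    unfolding distrib_left cos_add sin_add c by simp_all
qed

lemma per_uu: "periodic_xy (uu (real n) (real n') F G)"
  unfolding periodic_xy_def uu_def cx_def cy_def tt_def by (simp add: cos_per)

lemma per_AA: "periodic_xy (AA (real n) (real n') a b p1 p2)"
  unfolding periodic_xy_def AA_def A11_def A12_def A21_def A22_def cx_def cy_def sx_def sy_def tt_def
  by (simp add: cos_per vec_eq_iff forall_2)

lemma AA_diag: "p1 (tt p) = 0 \<Longrightarrow> p2 (tt p) = 0 \<Longrightarrow> AA k k' a b p1 p2 p = diag_mat a b"
  unfolding AA_def diag_mat_def A11_def A12_def A21_def A22_def
  by (simp add: vec_eq_iff forall_2)

lemma C2d:
  assumes "\<And>s. (f0 has_real_derivative f1 s) (at s)" "\<And>s. (f1 has_real_derivative f2 s) (at s)"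
    "continuous_on UNIV f2"
  shows "C2_derivs T (\<lambda>n. if n = 0 then f0 else if n = 1 then f1 else f2)"
  unfolding C2_derivs_def using assms
  by (auto intro: has_field_derivative_at_within continuous_on_subset)

lemma alpha3: "(\<alpha>::nat) \<le> 2 \<Longrightarrow> \<alpha> = 0 \<or> \<alpha> = 1 \<or> \<alpha> = 2" by auto

lemma sqrt4: "x < 10 \<Longrightarrow> sqrt x \<le> 4"
  using real_sqrt_le_mono[of x 16] by simp




lemma chi_trans:
  assumes "0 < T" "0 \<le> \<mu>" "\<mu> * T \<le> 4" "0 \<le> \<nu>" "\<nu> * T \<le> 4" "0 < \<kappa>"
  shows "transloc chi0 chi1 chi2 chi3 T \<mu> \<nu> \<kappa>"
proof
  show "\<And>s. (chi0 has_real_derivative chi1 s) (at s)" by (rule chi0_deriv)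
  show "\<And>s. (chi1 has_real_derivative chi2 s) (at s)" by (rule chi1_deriv)
  show "\<And>s. (chi2 has_real_derivative chi3 s) (at s)" by (rule chi2_deriv)
  show "continuous_on UNIV chi3" by (rule chi3_cont)
  show "\<bar>chi0 s\<bar> \<le> 20000 \<and> \<bar>chi1 s\<bar> \<le> 20000 \<and> \<bar>chi2 s\<bar> \<le> 20000 \<and> \<bar>chi3 s\<bar> \<le> 20000"
    if "0 \<le> s" "s \<le> 1" for s using chi_mid[OF that] by linarith
  show "chi1 s = 0 \<and> chi2 s = 0 \<and> chi3 s = 0" if "s \<le> 0 \<or> 1 \<le> s" for s
    using chi_left[of s] chi_right[of s] that by auto
qed (use assms in auto)

lemma chi_trans':
  assumes "0 < T" "0 \<le> \<mu>" "\<mu> * T \<le> 4" "0 \<le> \<nu>" "\<nu> * T \<le> 4" "0 < \<kappa>"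
  shows "transloc (\<lambda>s. 1 - chi0 s) (\<lambda>s. - chi1 s) (\<lambda>s. - chi2 s) (\<lambda>s. - chi3 s) T \<mu> \<nu> \<kappa>"
proof
  show "\<And>s. ((\<lambda>s. 1 - chi0 s) has_real_derivative - chi1 s) (at s)"
    using chi0_deriv by (auto intro!: derivative_eq_intros)
  show "\<And>s. ((\<lambda>s. - chi1 s) has_real_derivative - chi2 s) (at s)"
    using chi1_deriv by (auto intro!: derivative_eq_intros)
  show "\<And>s. ((\<lambda>s. - chi2 s) has_real_derivative - chi3 s) (at s)"
    using chi2_deriv by (auto intro!: derivative_eq_intros)
  show "continuous_on UNIV (\<lambda>s. - chi3 s)" using chi3_cont by (intro continuous_intros)
  show "\<bar>1 - chi0 s\<bar> \<le> 20000 \<and> \<bar>- chi1 s\<bar> \<le> 20000 \<and> \<bar>- chi2 s\<bar> \<le> 20000 \<and> \<bar>- chi3 s\<bar> \<le> 20000"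
    if "0 \<le> s" "s \<le> 1" for s using chi_mid[OF that] by (simp add: abs_le_iff)
  show "- chi1 s = 0 \<and> - chi2 s = 0 \<and> - chi3 s = 0" if "s \<le> 0 \<or> 1 \<le> s" for s
    using chi_left[of s] chi_right[of s] that by auto
qed (use assms in auto)




lemma common:
  fixes \<epsilon> a b :: real and k k' :: nat
  assumes H: "0 < \<epsilon> \<and> \<epsilon> < (1/1000)^12 \<and> 1/10 < a \<and> a < 10 \<and> 1/10 < b \<and> b < 10 \<and>
    1 \<le> k \<and> k \<le> k' \<and> k' \<le> 2 * k \<and>
    \<epsilon> powr (-1/4) \<le> real k \<and> real k \<le> \<epsilon> powr (-1/3) \<and>
    \<epsilon> powr (-1/4) \<le> real k' \<and> real k' \<le> \<epsilon> powr (-1/3)"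
  shows "0 < \<epsilon> powr (1/3)" "\<epsilon> powr (1/3) \<le> (1/1000)^4" "10^9 \<le> real k" "10^9 \<le> real k'"
    "(\<epsilon> powr (1/3))^3 = \<epsilon>" "(\<epsilon> powr (1/3))^2 = \<epsilon> powr (2/3)"
    "0 \<le> real k * sqrt a" "real k * sqrt a * \<epsilon> powr (1/3) \<le> 4"
    "0 \<le> real k' * sqrt b" "real k' * sqrt b * \<epsilon> powr (1/3) \<le> 4"
    "real k * sqrt a \<le> 4 * real k" "real k' * sqrt b \<le> 4 * real k'"
    "real k \<le> real k'" "real k' \<le> 2 * real k"
proof -
  note S = setup_eps[of \<epsilon> "real k"] setup_eps[of \<epsilon> "real k'"]
  show "0 < \<epsilon> powr (1/3)" "\<epsilon> powr (1/3) \<le> (1/1000)^4" "10^9 \<le> real k" "10^9 \<le> real k'"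
    "(\<epsilon> powr (1/3))^3 = \<epsilon>" "(\<epsilon> powr (1/3))^2 = \<epsilon> powr (2/3)"
    using S H by auto
  have kt: "real k * \<epsilon> powr (1/3) \<le> 1" "real k' * \<epsilon> powr (1/3) \<le> 1" using S H by auto
  have sa: "sqrt a \<le> 4" "sqrt b \<le> 4" using H by (auto intro: sqrt4)
  show "0 \<le> real k * sqrt a" "0 \<le> real k' * sqrt b" using H by auto
  have "real k * sqrt a * \<epsilon> powr (1/3) = sqrt a * (real k * \<epsilon> powr (1/3))" by simp
  also have "\<dots> \<le> 4 * 1" by (rule mult_mono) (use sa kt H in auto)
  finally show "real k * sqrt a * \<epsilon> powr (1/3) \<le> 4" by simp
  have "real k' * sqrt b * \<epsilon> powr (1/3) = sqrt b * (real k' * \<epsilon> powr (1/3))" by simp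
  also have "\<dots> \<le> 4 * 1" by (rule mult_mono) (use sa kt H in auto)
  finally show "real k' * sqrt b * \<epsilon> powr (1/3) \<le> 4" by simp
  show "real k * sqrt a \<le> 4 * real k" "real k' * sqrt b \<le> 4 * real k'"
    using sa by (simp_all add: mult.commute mult_left_mono)
  show "real k \<le> real k'" "real k' \<le> 2 * real k" using H by auto
qed




lemma expb: fixes l K t :: real shows "0 \<le> l \<Longrightarrow> l \<le> 4 * K \<Longrightarrow> 1 \<le> K \<Longrightarrow>
   \<bar>exp (- l * t)\<bar> \<le> 500000 * K ^ 0 * exp (- l * t) \<and>
   \<bar>- l * exp (- l * t)\<bar> \<le> 500000 * K ^ 1 * exp (- l * t) \<and>
   \<bar>l ^ 2 * exp (- l * t)\<bar> \<le> 500000 * K ^ 2 * exp (- l * t)"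
proof -
  assume l: "0 \<le> l" "l \<le> 4 * K" "1 \<le> K"
  have e: "0 < exp (- l * t)" by simp
  have l2: "l^2 \<le> (4*K)^2" by (rule power_mono) (use l in auto)
  have a: "l * exp (- l * t) \<le> 500000 * K * exp (- l * t)" by (rule mult_right_mono) (use l in auto)
  have l3: "l^2 \<le> 500000 * K^2"
  proof -
    have "(4*K)^2 = 16*K^2" by simp
    moreover have "0 \<le> K^2" by simp
    ultimately show ?thesis using l2 by linarith
  qed
  have b: "l^2 * exp (- l * t) \<le> 500000 * K^2 * exp (- l * t)" by (rule mult_right_mono[OF l3]) simp
  show ?thesis using e a b l by (simp add: abs_mult)
qed

lemma part_i:
  fixes \<epsilon> a b :: real and k k' :: nat
  assumes H: "0 < \<epsilon> \<and> \<epsilon> < (1/1000)^12 \<and> 1/10 < a \<and> a < 10 \<and> 1/10 < b \<and> b < 10 \<and>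
    1 \<le> k \<and> k \<le> k' \<and> k' \<le> 2 * k \<and>
    \<epsilon> powr (-1/4) \<le> real k \<and> real k \<le> \<epsilon> powr (-1/3) \<and>
    \<epsilon> powr (-1/4) \<le> real k' \<and> real k' \<le> \<epsilon> powr (-1/3)"
  shows "\<exists>u At. C2_fun u \<and> periodic_xy u \<and> periodic_xy At \<and> reg_class 20 10 At \<and>
        (\<forall>p. wave_op At u p = 0) \<and>
        (\<forall>x y t. t \<le> 0 \<longrightarrow> u (x, y, t) = (\<lambda>(x, y, t). cos (real k * x) * exp (- real k * sqrt a * t)) (x, y, t) \<and> At (x, y, t) = diag_mat a b) \<and>
        (\<forall>x y t. \<epsilon> powr (1/3) \<le> t \<longrightarrow> u (x, y, t) = (\<lambda>(x, y, t). cos (real k * x) * exp (- real k * sqrt a * t)) (x, y, t) + \<epsilon> * (\<lambda>(x, y, t). cos (real k' * y) * exp (- real k' * sqrt b * t)) (x, y, t) \<and> At (x, y, t) = diag_mat a b) \<and>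
        (\<exists>F G. C2_derivs (\<epsilon> powr (1/3)) F \<and> C2_derivs (\<epsilon> powr (1/3)) G \<and>
           (\<forall>x y t. t \<in> {0..\<epsilon> powr (1/3)} \<longrightarrow>
              u (x, y, t) = F 0 t * cos (real k * x) + G 0 t * cos (real k' * y)) \<and>
           (\<forall>\<alpha>\<le>2. \<forall>t\<in>{0..\<epsilon> powr (1/3)}.
              \<bar>F \<alpha> t\<bar> \<le> 500000 * real k ^ \<alpha> * exp (- real k * sqrt a * t) \<and>
              \<bar>G \<alpha> t\<bar> \<le> 500000 * real k' ^ \<alpha> * \<epsilon> powr ((3 - real \<alpha>) / 3) * exp (- real k' * sqrt b * t)))"
proof -
  note C = common[OF H]
  define T where "T = \<epsilon> powr (1/3)"
  define K where "K = real k"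
  define K' where "K' = real k'"
  define l1 where "l1 = K * sqrt a"
  define l2 where "l2 = K' * sqrt b"
  have T: "0 < T" "T \<le> (1/1000)^4" "T^3 = \<epsilon>" "T^2 = \<epsilon> powr (2/3)" using C unfolding T_def by auto
  have K: "10^9 \<le> K" "10^9 \<le> K'" "K \<le> K'" "K' \<le> 2*K" using C unfolding K_def K'_def by auto
  have l: "0 \<le> l1" "l1 * T \<le> 4" "0 \<le> l2" "l2 * T \<le> 4" "l1 \<le> 4 * K" "l2 \<le> 4 * K'"
    using C unfolding l1_def l2_def T_def K_def K'_def by auto
  interpret X: transloc chi0 chi1 chi2 chi3 T l2 l1 K
    by (rule chi_trans) (use T l K in auto)
  define F where "F = (\<lambda>t. exp (- l1 * t))"
  define F1 where "F1 = (\<lambda>t. - l1 * exp (- l1 * t))"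
  define F2 where "F2 = (\<lambda>t. l1^2 * exp (- l1 * t))"
  have dF: "(F has_real_derivative F1 s) (at s)" for s
    unfolding F_def F1_def by (auto intro!: derivative_eq_intros)
  have dF1: "(F1 has_real_derivative F2 s) (at s)" for s
    unfolding F1_def F2_def by (auto intro!: derivative_eq_intros simp: power2_eq_square)
  have cF2: "continuous_on UNIV F2" unfolding F2_def by (intro continuous_intros)
  have ode1: "F2 t = a * K^2 * F t + K' * X.G0 t * 0" for t
    unfolding F2_def F_def l1_def using H by (simp add: power_mult_distrib)
  have ode2: "X.G2 t = b * K'^2 * X.G0 t + K * F t * X.ps t" for t
    using X.ode[of t] H unfolding F_def l2_def by (simp add: power_mult_distrib)
  have psb: "\<bar>X.ps t\<bar> \<le> 1/100" "\<bar>X.ps1 t\<bar> \<le> K" for t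
  proof -
    have "\<bar>X.ps t\<bar> \<le> T / K * 14580000" using X.bounds_ps by blast
    also have "T / K \<le> T" using T K by (simp add: divide_le_eq mult_le_cancel_left1) 
    then have "T / K * 14580000 \<le> T * 14580000" by (rule mult_right_mono) simp
    also have "\<dots> \<le> 1/100" using T by (simp add: power_divide)
    finally show "\<bar>X.ps t\<bar> \<le> 1/100" .
    have "\<bar>X.ps1 t\<bar> \<le> 1 / K * 72900000" using X.bounds_ps by blast
    also have "\<dots> \<le> K"
    proof -
      have "(10^9::real) * 10^9 \<le> K * K" by (rule mult_mono) (use K in auto)
      then have "72900000 \<le> K * K" by simp
      then show ?thesis using K by (simp add: divide_le_eq)
    qed
    finally show "\<bar>X.ps1 t\<bar> \<le> K" .
  qed
  show ?thesis
    unfolding T_def[symmetric] K_def[symmetric] K'_def[symmetric]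
  proof (intro exI conjI)
    show "C2_fun (uu K K' F X.G0)"
      by (rule C2u[OF dF dF1 X.G0_deriv X.G1_deriv cF2 X.cont_G2])
    show "periodic_xy (uu K K' F X.G0)" unfolding K_def K'_def by (rule per_uu)
    show "periodic_xy (AA K K' a b X.ps (\<lambda>t. 0))" unfolding K_def K'_def by (rule per_AA)
    show "reg_class 20 10 (AA K K' a b X.ps (\<lambda>t. 0))"
      by (rule reg0[where p1'=X.ps1 and p2'="\<lambda>t. 0"]) (use K H psb X.ps_deriv X.cont_ps1 in auto)
    show "\<forall>p. wave_op (AA K K' a b X.ps (\<lambda>t. 0)) (uu K K' F X.G0) p = 0"
      using wave0[where p1'=X.ps1 and p2'="\<lambda>t. 0", OF _ _ X.ps_deriv _ dF dF1 X.G0_deriv X.G1_deriv ode1 ode2] K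
      by auto
    show "\<forall>x y t. t \<le> 0 \<longrightarrow> uu K K' F X.G0 (x, y, t) = (\<lambda>(x, y, t). cos (K * x) * exp (- K * sqrt a * t)) (x, y, t)
       \<and> AA K K' a b X.ps (\<lambda>t. 0) (x, y, t) = diag_mat a b"
    proof (intro allI impI conjI)
      fix x y t :: real assume t: "t \<le> 0"
      have "t * (1/T) \<le> 0" using t T by (simp add: divide_nonpos_pos)
      then have G: "X.G0 t = 0" unfolding X.G0_def using chi_left by simp
      have ps: "X.ps t = 0" using X.ps_out t by blast
      show "uu K K' F X.G0 (x, y, t) = (\<lambda>(x, y, t). cos (K * x) * exp (- K * sqrt a * t)) (x, y, t)"
        by (simp add: uu_def tt_def cx_def cy_def G F_def l1_def)
      show "AA K K' a b X.ps (\<lambda>t. 0) (x, y, t) = diag_mat a b"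
        by (rule AA_diag) (simp_all add: tt_def ps)
    qed
    show "\<forall>x y t. T \<le> t \<longrightarrow> uu K K' F X.G0 (x, y, t) = (\<lambda>(x, y, t). cos (K * x) * exp (- K * sqrt a * t)) (x, y, t)
       + \<epsilon> * (\<lambda>(x, y, t). cos (K' * y) * exp (- K' * sqrt b * t)) (x, y, t)
       \<and> AA K K' a b X.ps (\<lambda>t. 0) (x, y, t) = diag_mat a b"
    proof (intro allI impI conjI)
      fix x y t :: real assume t: "T \<le> t"
      have "1 \<le> t * (1/T)" using t T by (simp add: field_simps)
      then have G: "X.G0 t = \<epsilon> * exp (- K' * sqrt b * t)" unfolding X.G0_def using chi_right T by (simp add: l2_def)
      have ps: "X.ps t = 0" using X.ps_out t by blast
      show "uu K K' F X.G0 (x, y, t) = (\<lambda>(x, y, t). cos (K * x) * exp (- K * sqrt a * t)) (x, y, t)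
         + \<epsilon> * (\<lambda>(x, y, t). cos (K' * y) * exp (- K' * sqrt b * t)) (x, y, t)"
        by (simp add: uu_def tt_def cx_def cy_def G F_def l1_def)
      show "AA K K' a b X.ps (\<lambda>t. 0) (x, y, t) = diag_mat a b"
        by (rule AA_diag) (simp_all add: tt_def ps)
    qed
    show "C2_derivs T (\<lambda>n. if n = 0 then F else if n = 1 then F1 else F2)"
      by (rule C2d[OF dF dF1 cF2])
    show "C2_derivs T (\<lambda>n. if n = 0 then X.G0 else if n = 1 then X.G1 else X.G2)"
      by (rule C2d[OF X.G0_deriv X.G1_deriv X.cont_G2])
    show "\<forall>x y t. t \<in> {0..T} \<longrightarrow> uu K K' F X.G0 (x, y, t) =
       (if (0::nat) = 0 then F else if (0::nat) = 1 then F1 else F2) t * cos (K * x) +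
       (if (0::nat) = 0 then X.G0 else if (0::nat) = 1 then X.G1 else X.G2) t * cos (K' * y)"
      by (simp add: uu_def tt_def cx_def cy_def)
    show "\<forall>\<alpha>\<le>2. \<forall>t\<in>{0..T}.
       \<bar>(if \<alpha> = 0 then F else if \<alpha> = 1 then F1 else F2) t\<bar> \<le> 500000 * K ^ \<alpha> * exp (- K * sqrt a * t) \<and>
       \<bar>(if \<alpha> = 0 then X.G0 else if \<alpha> = 1 then X.G1 else X.G2) t\<bar> \<le> 500000 * K' ^ \<alpha> * \<epsilon> powr ((3 - real \<alpha>) / 3) * exp (- K' * sqrt b * t)"
    proof (intro allI impI ballI)
      fix \<alpha> :: nat and t assume \<alpha>: "\<alpha> \<le> 2" and t: "t \<in> {0..T}"
      have Fb: "\<bar>F t\<bar> \<le> 500000 * K ^ 0 * exp (- K * sqrt a * t) \<and>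
         \<bar>F1 t\<bar> \<le> 500000 * K ^ 1 * exp (- K * sqrt a * t) \<and>
         \<bar>F2 t\<bar> \<le> 500000 * K ^ 2 * exp (- K * sqrt a * t)"
        using expb[of l1 K t] l K unfolding F_def F1_def F2_def l1_def by simp
      have Gb: "\<bar>X.G0 t\<bar> \<le> T^3 * exp (-l2*t) * 20000 \<and> \<bar>X.G1 t\<bar> \<le> T^2 * exp (-l2*t) * 100000 \<and>
         \<bar>X.G2 t\<bar> \<le> T * exp (-l2*t) * 500000" using X.bounds_G t by auto
      have E: "0 < exp (-l2*t)" by simp
      have K1: "1 \<le> K'" "1 \<le> K'^2" using K by auto
      have g0: "T^3 * exp (-l2*t) * 20000 \<le> 500000 * K' ^ 0 * \<epsilon> * exp (- K' * sqrt b * t)"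
        using T E H by (simp add: l2_def)
      have g1: "T^2 * exp (-l2*t) * 100000 \<le> 500000 * K' ^ 1 * \<epsilon> powr (2/3) * exp (- K' * sqrt b * t)"
      proof -
        have "T^2 * exp (-l2*t) * 100000 \<le> T^2 * exp (-l2*t) * 500000" using T E by simp
        also have "\<dots> \<le> T^2 * exp (-l2*t) * 500000 * K'"
          using mult_left_mono[OF K1(1), of "T^2 * exp (-l2*t) * 500000"] T E by simp
        finally show ?thesis using T by (simp add: l2_def ac_simps)
      qed
      have g2: "T * exp (-l2*t) * 500000 \<le> 500000 * K' ^ 2 * T * exp (- K' * sqrt b * t)"
      proof -
        have "T * exp (-l2*t) * 500000 \<le> T * exp (-l2*t) * 500000 * K'^2"
          using mult_left_mono[OF K1(2), of "T * exp (-l2*t) * 500000"] T E by simp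
        then show ?thesis by (simp add: l2_def ac_simps)
      qed
      show "\<bar>(if \<alpha> = 0 then F else if \<alpha> = 1 then F1 else F2) t\<bar> \<le> 500000 * K ^ \<alpha> * exp (- K * sqrt a * t) \<and>
       \<bar>(if \<alpha> = 0 then X.G0 else if \<alpha> = 1 then X.G1 else X.G2) t\<bar> \<le> 500000 * K' ^ \<alpha> * \<epsilon> powr ((3 - real \<alpha>) / 3) * exp (- K' * sqrt b * t)"
        using alpha3[OF \<alpha>]
      proof (elim disjE)
        assume a0: "\<alpha> = 0"
        have "\<bar>X.G0 t\<bar> \<le> 500000 * K' ^ 0 * \<epsilon> * exp (- K' * sqrt b * t)" using Gb g0 by linarith
        then show ?thesis using Fb a0 H by simp
      next
        assume a1: "\<alpha> = 1"
        have "\<bar>X.G1 t\<bar> \<le> 500000 * K' ^ 1 * \<epsilon> powr (2/3) * exp (- K' * sqrt b * t)" using Gb g1 by linarith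
        moreover have "(3 - real \<alpha>) / 3 = 2/3" using a1 by simp
        ultimately show ?thesis using Fb a1 by simp
      next
        assume a2: "\<alpha> = 2"
        have "\<bar>X.G2 t\<bar> \<le> 500000 * K' ^ 2 * T * exp (- K' * sqrt b * t)" using Gb g2 by linarith
        moreover have "(3 - real \<alpha>) / 3 = 1/3" using a2 by simp
        ultimately show ?thesis using Fb a2 T_def by simp
      qed
    qed
  qed
qed




lemma part_ii:
  fixes \<epsilon> a b :: real and k k' :: nat
  assumes H: "0 < \<epsilon> \<and> \<epsilon> < (1/1000)^12 \<and> 1/10 < a \<and> a < 10 \<and> 1/10 < b \<and> b < 10 \<and>
    1 \<le> k \<and> k \<le> k' \<and> k' \<le> 2 * k \<and>
    \<epsilon> powr (-1/4) \<le> real k \<and> real k \<le> \<epsilon> powr (-1/3) \<and>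
    \<epsilon> powr (-1/4) \<le> real k' \<and> real k' \<le> \<epsilon> powr (-1/3)"
  shows "\<exists>u At. C2_fun u \<and> periodic_xy u \<and> periodic_xy At \<and> reg_class 20 10 At \<and>
        (\<forall>p. wave_op At u p = 0) \<and>
        (\<forall>x y t. t \<le> 0 \<longrightarrow> u (x, y, t) = \<epsilon> * (\<lambda>(x, y, t). cos (real k * x) * exp (- real k * sqrt a * t)) (x, y, t) + (\<lambda>(x, y, t). cos (real k' * y) * exp (- real k' * sqrt b * t)) (x, y, t) \<and> At (x, y, t) = diag_mat a b) \<and>
        (\<forall>x y t. \<epsilon> powr (1/3) \<le> t \<longrightarrow> u (x, y, t) = (\<lambda>(x, y, t). cos (real k' * y) * exp (- real k' * sqrt b * t)) (x, y, t) \<and> At (x, y, t) = diag_mat a b) \<and>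
        (\<exists>F G. C2_derivs (\<epsilon> powr (1/3)) F \<and> C2_derivs (\<epsilon> powr (1/3)) G \<and>
           (\<forall>x y t. t \<in> {0..\<epsilon> powr (1/3)} \<longrightarrow>
              u (x, y, t) = F 0 t * cos (real k * x) + G 0 t * cos (real k' * y)) \<and>
           (\<forall>\<alpha>\<le>2. \<forall>t\<in>{0..\<epsilon> powr (1/3)}.
              \<bar>F \<alpha> t\<bar> \<le> 500000 * real k ^ \<alpha> * \<epsilon> powr ((3 - real \<alpha>) / 3) * exp (- real k * sqrt a * t) \<and>
              \<bar>G \<alpha> t\<bar> \<le> 500000 * real k' ^ \<alpha> * exp (- real k' * sqrt b * t)))"
proof -
  note C = common[OF H]
  define T where "T = \<epsilon> powr (1/3)"
  define K where "K = real k"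
  define K' where "K' = real k'"
  define l1 where "l1 = K * sqrt a"
  define l2 where "l2 = K' * sqrt b"
  have T: "0 < T" "T \<le> (1/1000)^4" "T^3 = \<epsilon>" "T^2 = \<epsilon> powr (2/3)" using C unfolding T_def by auto
  have K: "10^9 \<le> K" "10^9 \<le> K'" "K \<le> K'" "K' \<le> 2*K" using C unfolding K_def K'_def by auto
  have l: "0 \<le> l1" "l1 * T \<le> 4" "0 \<le> l2" "l2 * T \<le> 4" "l1 \<le> 4 * K" "l2 \<le> 4 * K'"
    using C unfolding l1_def l2_def T_def K_def K'_def by auto
  interpret Y: transloc "\<lambda>s. 1 - chi0 s" "\<lambda>s. - chi1 s" "\<lambda>s. - chi2 s" "\<lambda>s. - chi3 s" T l1 l2 K'
    by (rule chi_trans') (use T l K in auto)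
  define G where "G = (\<lambda>t. exp (- l2 * t))"
  define G1 where "G1 = (\<lambda>t. - l2 * exp (- l2 * t))"
  define G2 where "G2 = (\<lambda>t. l2^2 * exp (- l2 * t))"
  have dG: "(G has_real_derivative G1 s) (at s)" for s
    unfolding G_def G1_def by (auto intro!: derivative_eq_intros)
  have dG1: "(G1 has_real_derivative G2 s) (at s)" for s
    unfolding G1_def G2_def by (auto intro!: derivative_eq_intros simp: power2_eq_square)
  have cG2: "continuous_on UNIV G2" unfolding G2_def by (intro continuous_intros)
  have ode2: "G2 t = b * K'^2 * G t + K * Y.G0 t * 0" for t
    unfolding G2_def G_def l2_def using H by (simp add: power_mult_distrib)
  have ode1: "Y.G2 t = a * K^2 * Y.G0 t + K' * G t * Y.ps t" for t
    using Y.ode[of t] H unfolding G_def l1_def by (simp add: power_mult_distrib)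
  have psb: "\<bar>Y.ps t\<bar> \<le> 1/100" "\<bar>Y.ps1 t\<bar> \<le> K" for t
  proof -
    have "\<bar>Y.ps t\<bar> \<le> T / K' * 14580000" using Y.bounds_ps by blast
    also have "T / K' \<le> T" using T K by (simp add: divide_le_eq mult_le_cancel_left1) 
    then have "T / K' * 14580000 \<le> T * 14580000" by (rule mult_right_mono) simp
    also have "\<dots> \<le> 1/100" using T by (simp add: power_divide)
    finally show "\<bar>Y.ps t\<bar> \<le> 1/100" .
    have "\<bar>Y.ps1 t\<bar> \<le> 1 / K' * 72900000" using Y.bounds_ps by blast
    also have "\<dots> \<le> K"
    proof -
      have "(10^9::real) * 10^9 \<le> K * K'" by (rule mult_mono) (use K in auto)
      then have "72900000 \<le> K * K'" by simp
      then show ?thesis using K by (simp add: divide_le_eq)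
    qed
    finally show "\<bar>Y.ps1 t\<bar> \<le> K" .
  qed
  show ?thesis
    unfolding T_def[symmetric] K_def[symmetric] K'_def[symmetric]
  proof (intro exI conjI)
    show "C2_fun (uu K K' Y.G0 G)"
      by (rule C2u[OF Y.G0_deriv Y.G1_deriv dG dG1 Y.cont_G2 cG2])
    show "periodic_xy (uu K K' Y.G0 G)" unfolding K_def K'_def by (rule per_uu)
    show "periodic_xy (AA K K' a b (\<lambda>t. 0) Y.ps)" unfolding K_def K'_def by (rule per_AA)
    show "reg_class 20 10 (AA K K' a b (\<lambda>t. 0) Y.ps)"
      by (rule reg0[where p2'=Y.ps1 and p1'="\<lambda>t. 0"]) (use K H psb Y.ps_deriv Y.cont_ps1 in auto)
    show "\<forall>p. wave_op (AA K K' a b (\<lambda>t. 0) Y.ps) (uu K K' Y.G0 G) p = 0"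
      using wave0[where p2'=Y.ps1 and p1'="\<lambda>t. 0", OF _ _ _ Y.ps_deriv Y.G0_deriv Y.G1_deriv dG dG1 ode1 ode2] K
      by auto
    show "\<forall>x y t. t \<le> 0 \<longrightarrow> uu K K' Y.G0 G (x, y, t) = \<epsilon> * (\<lambda>(x, y, t). cos (K * x) * exp (- K * sqrt a * t)) (x, y, t)
       + (\<lambda>(x, y, t). cos (K' * y) * exp (- K' * sqrt b * t)) (x, y, t)
       \<and> AA K K' a b (\<lambda>t. 0) Y.ps (x, y, t) = diag_mat a b"
    proof (intro allI impI conjI)
      fix x y t :: real assume t: "t \<le> 0"
      have "t * (1/T) \<le> 0" using t T by (simp add: divide_nonpos_pos)
      then have G0: "Y.G0 t = \<epsilon> * exp (- K * sqrt a * t)" unfolding Y.G0_def using chi_left T by (simp add: l1_def)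
      have ps: "Y.ps t = 0" using Y.ps_out t by blast
      show "uu K K' Y.G0 G (x, y, t) = \<epsilon> * (\<lambda>(x, y, t). cos (K * x) * exp (- K * sqrt a * t)) (x, y, t)
       + (\<lambda>(x, y, t). cos (K' * y) * exp (- K' * sqrt b * t)) (x, y, t)"
        by (simp add: uu_def tt_def cx_def cy_def G0 G_def l2_def)
      show "AA K K' a b (\<lambda>t. 0) Y.ps (x, y, t) = diag_mat a b"
        by (rule AA_diag) (simp_all add: tt_def ps)
    qed
    show "\<forall>x y t. T \<le> t \<longrightarrow> uu K K' Y.G0 G (x, y, t) = (\<lambda>(x, y, t). cos (K' * y) * exp (- K' * sqrt b * t)) (x, y, t)
       \<and> AA K K' a b (\<lambda>t. 0) Y.ps (x, y, t) = diag_mat a b"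
    proof (intro allI impI conjI)
      fix x y t :: real assume t: "T \<le> t"
      have "1 \<le> t * (1/T)" using t T by (simp add: field_simps)
      then have G0: "Y.G0 t = 0" unfolding Y.G0_def using chi_right T by simp
      have ps: "Y.ps t = 0" using Y.ps_out t by blast
      show "uu K K' Y.G0 G (x, y, t) = (\<lambda>(x, y, t). cos (K' * y) * exp (- K' * sqrt b * t)) (x, y, t)"
        by (simp add: uu_def tt_def cx_def cy_def G0 G_def l2_def)
      show "AA K K' a b (\<lambda>t. 0) Y.ps (x, y, t) = diag_mat a b"
        by (rule AA_diag) (simp_all add: tt_def ps)
    qed
    show "C2_derivs T (\<lambda>n. if n = 0 then Y.G0 else if n = 1 then Y.G1 else Y.G2)"
      by (rule C2d[OF Y.G0_deriv Y.G1_deriv Y.cont_G2])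
    show "C2_derivs T (\<lambda>n. if n = 0 then G else if n = 1 then G1 else G2)"
      by (rule C2d[OF dG dG1 cG2])
    show "\<forall>x y t. t \<in> {0..T} \<longrightarrow> uu K K' Y.G0 G (x, y, t) =
       (if (0::nat) = 0 then Y.G0 else if (0::nat) = 1 then Y.G1 else Y.G2) t * cos (K * x) +
       (if (0::nat) = 0 then G else if (0::nat) = 1 then G1 else G2) t * cos (K' * y)"
      by (simp add: uu_def tt_def cx_def cy_def)
    show "\<forall>\<alpha>\<le>2. \<forall>t\<in>{0..T}.
       \<bar>(if \<alpha> = 0 then Y.G0 else if \<alpha> = 1 then Y.G1 else Y.G2) t\<bar> \<le> 500000 * K ^ \<alpha> * \<epsilon> powr ((3 - real \<alpha>) / 3) * exp (- K * sqrt a * t) \<and>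
       \<bar>(if \<alpha> = 0 then G else if \<alpha> = 1 then G1 else G2) t\<bar> \<le> 500000 * K' ^ \<alpha> * exp (- K' * sqrt b * t)"
    proof (intro allI impI ballI)
      fix \<alpha> :: nat and t assume \<alpha>: "\<alpha> \<le> 2" and t: "t \<in> {0..T}"
      have Fb: "\<bar>G t\<bar> \<le> 500000 * K' ^ 0 * exp (- K' * sqrt b * t) \<and>
         \<bar>G1 t\<bar> \<le> 500000 * K' ^ 1 * exp (- K' * sqrt b * t) \<and>
         \<bar>G2 t\<bar> \<le> 500000 * K' ^ 2 * exp (- K' * sqrt b * t)"
        using expb[of l2 K' t] l K unfolding G_def G1_def G2_def l2_def by simp
      have Gb: "\<bar>Y.G0 t\<bar> \<le> T^3 * exp (-l1*t) * 20000 \<and> \<bar>Y.G1 t\<bar> \<le> T^2 * exp (-l1*t) * 100000 \<and>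
         \<bar>Y.G2 t\<bar> \<le> T * exp (-l1*t) * 500000" using Y.bounds_G t by auto
      have E: "0 < exp (-l1*t)" by simp
      have K1: "1 \<le> K" "1 \<le> K^2" using K by auto
      have g0: "T^3 * exp (-l1*t) * 20000 \<le> 500000 * K ^ 0 * \<epsilon> * exp (- K * sqrt a * t)"
        using T E H by (simp add: l1_def)
      have g1: "T^2 * exp (-l1*t) * 100000 \<le> 500000 * K ^ 1 * \<epsilon> powr (2/3) * exp (- K * sqrt a * t)"
      proof -
        have "T^2 * exp (-l1*t) * 100000 \<le> T^2 * exp (-l1*t) * 500000" using T E by simp
        also have "\<dots> \<le> T^2 * exp (-l1*t) * 500000 * K"
          using mult_left_mono[OF K1(1), of "T^2 * exp (-l1*t) * 500000"] T E by simp
        finally show ?thesis using T by (simp add: l1_def ac_simps)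
      qed
      have g2: "T * exp (-l1*t) * 500000 \<le> 500000 * K ^ 2 * T * exp (- K * sqrt a * t)"
      proof -
        have "T * exp (-l1*t) * 500000 \<le> T * exp (-l1*t) * 500000 * K^2"
          using mult_left_mono[OF K1(2), of "T * exp (-l1*t) * 500000"] T E by simp
        then show ?thesis by (simp add: l1_def ac_simps)
      qed
      show "\<bar>(if \<alpha> = 0 then Y.G0 else if \<alpha> = 1 then Y.G1 else Y.G2) t\<bar> \<le> 500000 * K ^ \<alpha> * \<epsilon> powr ((3 - real \<alpha>) / 3) * exp (- K * sqrt a * t) \<and>
       \<bar>(if \<alpha> = 0 then G else if \<alpha> = 1 then G1 else G2) t\<bar> \<le> 500000 * K' ^ \<alpha> * exp (- K' * sqrt b * t)"
        using alpha3[OF \<alpha>]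
      proof (elim disjE)
        assume a0: "\<alpha> = 0"
        have "\<bar>Y.G0 t\<bar> \<le> 500000 * K ^ 0 * \<epsilon> * exp (- K * sqrt a * t)" using Gb g0 by linarith
        then show ?thesis using Fb a0 H by simp
      next
        assume a1: "\<alpha> = 1"
        have "\<bar>Y.G1 t\<bar> \<le> 500000 * K ^ 1 * \<epsilon> powr (2/3) * exp (- K * sqrt a * t)" using Gb g1 by linarith
        moreover have "(3 - real \<alpha>) / 3 = 2/3" using a1 by simp
        ultimately show ?thesis using Fb a1 by simp
      next
        assume a2: "\<alpha> = 2"
        have "\<bar>Y.G2 t\<bar> \<le> 500000 * K ^ 2 * T * exp (- K * sqrt a * t)" using Gb g2 by linarith
        moreover have "(3 - real \<alpha>) / 3 = 1/3" using a2 by simp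
        ultimately show ?thesis using Fb a2 T_def by simp
      qed
    qed
  qed
qed




theorem mainTheorem13:
  shows "\<exists>D>0. \<exists>M::real. \<forall>\<epsilon>::real. \<forall>a b::real. \<forall>k k'::nat.
    0 < \<epsilon> \<and> \<epsilon> < D \<and> 1/10 < a \<and> a < 10 \<and> 1/10 < b \<and> b < 10 \<and>
    1 \<le> k \<and> k \<le> k' \<and> k' \<le> 2 * k \<and>
    \<epsilon> powr (-1/4) \<le> real k \<and> real k \<le> \<epsilon> powr (-1/3) \<and>
    \<epsilon> powr (-1/4) \<le> real k' \<and> real k' \<le> \<epsilon> powr (-1/3)
    \<longrightarrow>
    (let T = \<epsilon> powr (1/3);
         A = (\<lambda>p::pt. diag_mat a b);
         u1 = (\<lambda>(x, y, t). cos (real k * x) * exp (- real k * sqrt a * t));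
         u2 = (\<lambda>(x, y, t). cos (real k' * y) * exp (- real k' * sqrt b * t))
     in
     \<comment> \<open>(i)\<close>
     (\<exists>u At. C2_fun u \<and> periodic_xy u \<and> periodic_xy At \<and> reg_class 20 10 At \<and>
        (\<forall>p. wave_op At u p = 0) \<and>
        (\<forall>x y t. t \<le> 0 \<longrightarrow> u (x, y, t) = u1 (x, y, t) \<and> At (x, y, t) = A (x, y, t)) \<and>
        (\<forall>x y t. T \<le> t \<longrightarrow> u (x, y, t) = u1 (x, y, t) + \<epsilon> * u2 (x, y, t) \<and> At (x, y, t) = A (x, y, t)) \<and>
        (\<exists>F G. C2_derivs T F \<and> C2_derivs T G \<and>
           (\<forall>x y t. t \<in> {0..T} \<longrightarrow>
              u (x, y, t) = F 0 t * cos (real k * x) + G 0 t * cos (real k' * y)) \<and>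
           (\<forall>\<alpha>\<le>2. \<forall>t\<in>{0..T}.
              \<bar>F \<alpha> t\<bar> \<le> M * real k ^ \<alpha> * exp (- real k * sqrt a * t) \<and>
              \<bar>G \<alpha> t\<bar> \<le> M * real k' ^ \<alpha> * \<epsilon> powr ((3 - real \<alpha>) / 3) * exp (- real k' * sqrt b * t)))) \<and>
     \<comment> \<open>(ii)\<close>
     (\<exists>u At. C2_fun u \<and> periodic_xy u \<and> periodic_xy At \<and> reg_class 20 10 At \<and>
        (\<forall>p. wave_op At u p = 0) \<and>
        (\<forall>x y t. t \<le> 0 \<longrightarrow> u (x, y, t) = \<epsilon> * u1 (x, y, t) + u2 (x, y, t) \<and> At (x, y, t) = A (x, y, t)) \<and>
        (\<forall>x y t. T \<le> t \<longrightarrow> u (x, y, t) = u2 (x, y, t) \<and> At (x, y, t) = A (x, y, t)) \<and>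
        (\<exists>F G. C2_derivs T F \<and> C2_derivs T G \<and>
           (\<forall>x y t. t \<in> {0..T} \<longrightarrow>
              u (x, y, t) = F 0 t * cos (real k * x) + G 0 t * cos (real k' * y)) \<and>
           (\<forall>\<alpha>\<le>2. \<forall>t\<in>{0..T}.
              \<bar>F \<alpha> t\<bar> \<le> M * real k ^ \<alpha> * \<epsilon> powr ((3 - real \<alpha>) / 3) * exp (- real k * sqrt a * t) \<and>
              \<bar>G \<alpha> t\<bar> \<le> M * real k' ^ \<alpha> * exp (- real k' * sqrt b * t)))))"
  apply (rule exI[of _ "(1/1000::real)^12"], rule conjI, simp)
  apply (rule exI[of _ "500000::real"])
  apply (intro allI impI)
  apply (unfold Let_def)
  apply (rule conjI)
   apply (erule part_i)
  apply (erule part_ii)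
  done


end
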